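(* Assume the standing setting described in the context, in either case (a) or case (b). In case (a), and in case (b) for every sufficiently small $\varepsilon>0$, there exist $\delta>0$ and $c_0,c_1,c_2>0$ such that for every solution $x$ of system (S) and every $t\ge 0$ with $\|x_t\|_h\le\delta$, the time derivative of $t\mapsto v(t,x_t)$ along the solution satisfies $$\frac{d v(t,x_t)}{dt}\le -c_0\|x(t)\|^{\gamma+\mu-1}-c_1\|x(t-h)\|^{\gamma+\mu-1}-c_2\int_{-h}^0\|x(t+\theta)\|^{\gamma+\mu-1}\,d\theta .$$
   Context: Standing setting. Fix $n\ge1$ and a delay $h>0$. $\|\cdot\|$ is the Euclidean norm on $\mathbb R^n$ (and the induced operator norm on matrices). $C_{[-h,0]}$ is the space of continuous $\varphi:[-h,0]\to\mathbb R^n$ with norm $\|\varphi\|_h=\max_{\theta\in[-h,0]}\|\varphi(\theta)\|$. Consider system (S): $\dot x(t)=f(x(t),x(t-h))+B(t)Q(x(t),x(t-h))$, $t\ge0$, with initial function $\varphi\in C_{[-h,0]}$; $x(t,\varphi)$ denotes its solution and $x_t\in C_{[-h,0]}$ is the state $x_t(\theta)=x(t+\theta)$, $\theta\in[-h,0]$. Assumptions: (i) $f:\mathbb R^n\times\mathbb R^n\to\mathbb R^n$ is Lipschitz, continuously differentiable in both arguments, and homogeneous of degree $\mu>1$: $f(c\mathrm x_1,c\mathrm x_2)=c^\mu f(\mathrm x_1,\mathrm x_2)$ for all $c>0$; constants $m_1,m_2,\eta_{11},\eta_{12}\ge0$ are such that $\|f(\mathrm x_1,\mathrm x_2)\|\le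 m_1\|\mathrm x_1\|^\mu+m_2\|\mathrm x_2\|^\mu$ and $\|\partial f/\partial \mathrm x_1(\mathrm x_1,\mathrm x_2)\|\le \eta_{11}\|\mathrm x_1\|^{\mu-1}+\eta_{12}\|\mathrm x_2\|^{\mu-1}$. (ii) $B:[0,\infty)\to\mathbb R^{n\times n}$ is continuous with $\|B(t)\|\le\hat b$ for all $t$. (iii) $Q:\mathbb R^n\times\mathbb R^n\to\mathbb R^n$ is continuously differentiable and, for some $\sigma>1$ and constants $p_1,p_2,q_{jk}\ge0$, $\|Q(\mathrm x_1,\mathrm x_2)\|\le p_1\|\mathrm x_1\|^\sigma+p_2\|\mathrm x_2\|^\sigma$ and $\|\partial Q/\partial\mathrm x_j(\mathrm x_1,\mathrm x_2)\|\le q_{j1}\|\mathrm x_1\|^{\sigma-1}+q_{j2}\|\mathrm x_2\|^{\sigma-1}$, $j=1,2$. (iv) The delay-free system $\dot x=f(x,x)$ is asymptotically stable, and $V:\mathbb R^n\to\mathbb R$ is a positive definite, twice continuously differentiable function, homogeneous of degree $\gamma\ge2$, with constants $\mathrm w,\alpha_0,\alpha_1,\beta,\psi>0$ such that $(\partial V/\partial\mathrm x)^T f(\mathrm x,\mathrm x)\le-\mathrm w\|\mathrm x\|^{\gamma+\mu-1}$, $\alpha_0\|\mathrm x\|^\gamma\le V(\mathrm x)\le\alpha_1\|\mathrm x\|^\gamma$, $\|\partial V/\partial\mathrm x\|\le\beta\|\mathrm x\|^{\gamma-1}$, $\|\partial^2V/\partial\mathrm x^2\|\le\psi\|\mathrm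 x\|^{\gamma-2}$. Perturbation classes: case (a): $\int_0^tB(s)\,ds$ is bounded on $t\ge0$ and $\sigma>(\mu+1)/2$; case (b): $\frac1T\int_t^{t+T}B(s)\,ds\to0$ as $T\to+\infty$ uniformly in $t\ge0$, and $\sigma\ge\mu$. Define $L(t,\varepsilon)=\int_0^{t+h}e^{-\varepsilon(t+h-s)}B(s)\,ds$, where $\varepsilon=0$ in case (a) and $\varepsilon>0$ is a parameter in case (b). In case (b), $\omega(\varepsilon):=\sup_{t\ge0}\varepsilon\|L(t,\varepsilon)\|$ is finite and $\omega(\varepsilon)\to0$ as $\varepsilon\to0$. In case (a) let $l_0>0$ with $\|L(t,0)\|\le l_0$ for all $t\ge0$, and throughout read $\omega(\varepsilon)$ as $0$ and $\omega(\varepsilon)/\varepsilon$ as $l_0$. Fix $\mathrm w_1,\mathrm w_2>0$ with $\mathrm w_0:=\mathrm w-\mathrm w_1-h\mathrm w_2>0$. The functional $v:[0,\infty)\times C_{[-h,0]}\to\mathbb R$ is $v(t,\varphi)=V(\varphi(0))+\Big(\frac{\partial V}{\partial\mathrm x}(\varphi(0))\Big)^T\Big(\int_{-h}^0\big(f(\varphi(0),\varphi(\theta))+B(t+\theta+h)Q(\varphi(0),\varphi(\theta))\big)d\theta-L(t,\varepsilon)Q(\varphi(0),\varphi(0))\Big)+\int_{-h}^0(\mathrm w_1+(h+\theta)\mathrm w_2)\|\varphi(\theta)\|^{\gamma+\mu-1}d\theta.$ For $\alpha>1$, $S_\alpha=\{\varphi\in C_{[-h,0]}:\|\varphi(\theta)\|\le\alpha\|\varphi(0)\|\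 \forall\theta\in[-h,0]\}$. Notation: $m=m_1+m_2$, $p=p_1+p_2$. *)

theory Defs
  imports "HOL-Analysis.Analysis"
begin

text \<open>A solution of system (S) on [-h, infinity): continuous on [-h, infinity) (its restriction
to [-h,0] is the initial function), and satisfying the delay equation for t >= 0
(one-sided derivative at t = 0).\<close>
definition is_solution ::
  "real \<Rightarrow> (real^'n \<Rightarrow> real^'n \<Rightarrow> real^'n) \<Rightarrow> (real \<Rightarrow> real^'n^'n)
   \<Rightarrow> (real^'n \<Rightarrow> real^'n \<Rightarrow> real^'n) \<Rightarrow> (real \<Rightarrow> real^'n) \<Rightarrow> bool" where
  "is_solution h f B Q x \<longleftrightarrow>
     continuous_on {-h..} x \<and>
     (\<forall>t\<ge>0. (x has_vector_derivative (f (x t) (x (t - h)) + B t *v Q (x t) (x (t - h))))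
               (at t within {0..}))"

text \<open>The state x_t.\<close>
definition state :: "(real \<Rightarrow> real^'n) \<Rightarrow> real \<Rightarrow> real \<Rightarrow> real^'n" where
  "state x t = (\<lambda>\<theta>. x (t + \<theta>))"

text \<open>L(t,eps) = integral from 0 to t+h of exp(-eps(t+h-s)) B(s) ds.\<close>
definition Lmat :: "real \<Rightarrow> (real \<Rightarrow> real^'n^'n) \<Rightarrow> real \<Rightarrow> real \<Rightarrow> real^'n^'n" where
  "Lmat h B \<epsilon> t = integral {0..t + h} (\<lambda>s. exp (- \<epsilon> * (t + h - s)) *\<^sub>R B s)"

text \<open>The Lyapunov--Krasovskii functional v(t, phi); V' is the gradient of V.\<close>
definition vfun ::
  "real \<Rightarrow> (real^'n \<Rightarrow> real^'n \<Rightarrow> real^'n) \<Rightarrow> (real \<Rightarrow> real^'n^'n)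
   \<Rightarrow> (real^'n \<Rightarrow> real^'n \<Rightarrow> real^'n) \<Rightarrow> (real^'n \<Rightarrow> real) \<Rightarrow> (real^'n \<Rightarrow> real^'n)
   \<Rightarrow> real \<Rightarrow> real \<Rightarrow> real \<Rightarrow> real \<Rightarrow> real \<Rightarrow> real \<Rightarrow> (real \<Rightarrow> real^'n) \<Rightarrow> real" where
  "vfun h f B Q V V' \<gamma> \<mu> w1 w2 \<epsilon> t \<phi> =
     V (\<phi> 0)
     + V' (\<phi> 0) \<bullet> (integral {-h..0} (\<lambda>\<theta>. f (\<phi> 0) (\<phi> \<theta>) + B (t + \<theta> + h) *v Q (\<phi> 0) (\<phi> \<theta>))
                     - Lmat h B \<epsilon> t *v Q (\<phi> 0) (\<phi> 0))
     + integral {-h..0} (\<lambda>\<theta>. (w1 + (h + \<theta>) * w2) * norm (\<phi> \<theta>) powr (\<gamma> + \<mu> - 1))"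

text \<open>Conclusion of the lemma for a given value of the parameter eps.\<close>
definition derivative_estimate ::
  "real \<Rightarrow> (real^'n \<Rightarrow> real^'n \<Rightarrow> real^'n) \<Rightarrow> (real \<Rightarrow> real^'n^'n)
   \<Rightarrow> (real^'n \<Rightarrow> real^'n \<Rightarrow> real^'n) \<Rightarrow> (real^'n \<Rightarrow> real) \<Rightarrow> (real^'n \<Rightarrow> real^'n)
   \<Rightarrow> real \<Rightarrow> real \<Rightarrow> real \<Rightarrow> real \<Rightarrow> real \<Rightarrow> bool" where
  "derivative_estimate h f B Q V V' \<gamma> \<mu> w1 w2 \<epsilon> \<longleftrightarrow>
     (\<exists>\<delta>>0. \<exists>c0>0. \<exists>c1>0. \<exists>c2>0.
       \<forall>x t D. is_solution h f B Q x \<and> t \<ge> 0 \<and>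
               (\<forall>\<theta>\<in>{-h..0}. norm (x (t + \<theta>)) \<le> \<delta>) \<and>
               ((\<lambda>s. vfun h f B Q V V' \<gamma> \<mu> w1 w2 \<epsilon> s (state x s)) has_real_derivative D)
                  (at t within {0..})
         \<longrightarrow> D \<le> - c0 * norm (x t) powr (\<gamma> + \<mu> - 1)
                  - c1 * norm (x (t - h)) powr (\<gamma> + \<mu> - 1)
                  - c2 * integral {-h..0} (\<lambda>\<theta>. norm (x (t + \<theta>)) powr (\<gamma> + \<mu> - 1)))"

end

theory Submission
  imports Defs
begin

lemma ftc_within:
  fixes g :: "real \<Rightarrow> 'a::banach"
  assumes "continuous_on {c..} g" "c \<le> t"
  shows "((\<lambda>s. integral {c..s} g) has_vector_derivative g t) (at t within {c..})"
proof -
  have "continuous_on {c..t+1} g" using assms(1) by (rule continuous_on_subset) auto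
  then have "((\<lambda>s. integral {c..s} g) has_vector_derivative g t) (at t within {c..t+1})"
    using assms(2) by (intro integral_has_vector_derivative) auto
  moreover have "at t within {c..t+1} = at t within {c..}"
    by (rule at_within_nhd[where S="{t-1<..<t+1}"]) auto
  ultimately show ?thesis by simp
qed

lemma shift_deriv:
  fixes g :: "real \<Rightarrow> 'a::banach"
  assumes g: "continuous_on {-h..} g" and h: "h > 0" and t: "t \<ge> 0"
  shows "((\<lambda>s. integral {-h..0} (\<lambda>\<theta>. g (s+\<theta>))) has_vector_derivative g t - g (t-h)) (at t within {0..})"
proof -
  define F where "F s = integral {-h..s} g" for s
  have eq: "integral {-h..0} (\<lambda>\<theta>. g (s+\<theta>)) = F s - F (s - h)" if "s \<in> {0..}" for s
  proof -
    have "integral {-h..0} (\<lambda>\<theta>. g (s+\<theta>)) = integral {-h+s..0+s} g"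
      using integral_shift_Icc_real[of "-h" 0 g s] by (simp add: o_def add.commute)
    also have "\<dots> = F s - F (s - h)"
    proof -
      have gi: "g integrable_on {-h..s}"
        by (rule integrable_continuous_interval, rule continuous_on_subset[OF g]) auto
      have "integral {-h..s-h} g + integral {s-h..s} g = integral {-h..s} g"
        using Henstock_Kurzweil_Integration.integral_combine[where a="-h" and c="s-h" and b=s and f=g] that h gi by simp
      then show ?thesis unfolding F_def by (simp add: algebra_simps)
    qed
    finally show ?thesis .
  qed
  have F1: "(F has_vector_derivative g t) (at t within {0..})"
    using ftc_within[OF g, of t] t h unfolding F_def
    by (intro has_vector_derivative_within_subset[where T="{0..}" and S="{-h..}"]) auto
  have "(F has_vector_derivative g (t-h)) (at (t-h) within {-h..})"
    using ftc_within[OF g, of "t-h"] t unfolding F_def by simp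
  then have Fd: "(F has_vector_derivative g (t-h)) (at ((\<lambda>s. s - h) t) within (\<lambda>s. s - h) ` {0..})"
    by (rule has_vector_derivative_within_subset) auto
  have d1: "((\<lambda>s. s - h) has_vector_derivative 1) (at t within {0..})"
    by (auto intro!: derivative_eq_intros)
  from vector_diff_chain_within[OF d1 Fd]
  have F2: "((\<lambda>s. F (s - h)) has_vector_derivative g (t-h)) (at t within {0..})"
    by (simp add: o_def)
  have "((\<lambda>s. F s - F (s - h)) has_vector_derivative g t - g (t-h)) (at t within {0..})"
    using F1 F2 by (rule has_vector_derivative_diff)
  then show ?thesis
    by (rule has_vector_derivative_transform[rotated 2]) (use t eq in auto)
qed

lemma param_deriv:
  fixes g :: "real^'n \<Rightarrow> real \<Rightarrow> 'c::euclidean_space"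
    and ga :: "real^'n \<Rightarrow> real \<Rightarrow> ((real^'n) \<Rightarrow>\<^sub>L 'c)"
  assumes gc: "continuous_on (UNIV \<times> {-h..}) (\<lambda>p. g (fst p) (snd p))"
    and gac: "continuous_on (UNIV \<times> {-h..}) (\<lambda>p. ga (fst p) (snd p))"
    and gd: "\<And>a u. u \<ge> -h \<Longrightarrow> ((\<lambda>a. g a u) has_derivative blinfun_apply (ga a u)) (at a)"
    and h: "h > 0" and t: "t \<ge> 0"
    and xd: "(x has_vector_derivative y) (at t within {0..})"
  shows "((\<lambda>s. integral {-h..0} (\<lambda>\<theta>. g (x s) (s+\<theta>))) has_vector_derivative
          (g (x t) t - g (x t) (t-h) + blinfun_apply (integral {-h..0} (\<lambda>\<theta>. ga (x t) (t+\<theta>))) y))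
         (at t within {0..})"
proof -
  define \<Phi> where "\<Phi> s a = integral {-h..0} (\<lambda>\<theta>. g a (s+\<theta>))" for s a
  define fy where "fy s a = integral {-h..0} (\<lambda>\<theta>. ga a (s+\<theta>))" for s a
  have gc1: "continuous_on {-h..} (g a)" for a
  proof -
    have c: "continuous_on {-h..} (\<lambda>u. (a, u))" by (intro continuous_intros)
    show ?thesis using continuous_on_compose2[OF gc c] by auto
  qed
  have fx: "((\<lambda>s. \<Phi> s (x t)) has_derivative (\<lambda>d. d *\<^sub>R (g (x t) t - g (x t) (t-h)))) (at t within {0..})"
    using shift_deriv[OF gc1 h t] unfolding \<Phi>_def has_vector_derivative_def .
  have cont_s: "continuous_on (UNIV \<times> {-h..0}) (\<lambda>(a, \<theta>). ga a (s+\<theta>))" if "s \<ge> 0" for s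
  proof -
    have c: "continuous_on (UNIV \<times> {-h..0}) (\<lambda>p. (fst p, s + snd p))" by (intro continuous_intros)
    have i: "(\<lambda>p. (fst p, s + snd p)) ` (UNIV \<times> {-h..0}) \<subseteq> UNIV \<times> {-h..}" using that by auto
    show ?thesis using continuous_on_compose2[OF gac c i] by (auto simp: split_beta)
  qed
  have fy: "((\<lambda>a. \<Phi> s a) has_derivative blinfun_apply (fy s a)) (at a within UNIV)"
    if "s \<in> {0..}" for s a
  proof -
    have "((\<lambda>a. integral (cbox (-h) 0) (\<lambda>\<theta>. g a (s+\<theta>))) has_derivative
           blinfun_apply (integral (cbox (-h) 0) (\<lambda>\<theta>. ga a (s+\<theta>)))) (at a within UNIV)"
    proof (rule leibniz_rule[where fx="\<lambda>a \<theta>. ga a (s+\<theta>)"])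
      show "((\<lambda>a. g a (s+\<theta>)) has_derivative blinfun_apply (ga a (s+\<theta>))) (at a within UNIV)"
        if "\<theta> \<in> cbox (-h) 0" for a \<theta> using that \<open>s \<in> {0..}\<close> by (intro gd) auto
      show "(\<lambda>\<theta>. g a (s+\<theta>)) integrable_on cbox (-h) 0" for a
      proof -
        have c: "continuous_on {-h..0} (\<lambda>\<theta>. s+\<theta>)" by (intro continuous_intros)
        have "continuous_on {-h..0} (\<lambda>\<theta>. g a (s+\<theta>))"
          using continuous_on_compose2[OF gc1 c] \<open>s \<in> {0..}\<close> by (auto simp: image_subset_iff)
        then show ?thesis by (auto intro!: integrable_continuous_interval)
      qed
      show "continuous_on (UNIV \<times> cbox (-h) 0) (\<lambda>(a, \<theta>). ga a (s+\<theta>))"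
        using cont_s \<open>s \<in> {0..}\<close> by simp
    qed auto
    then show ?thesis unfolding \<Phi>_def fy_def by simp
  qed
  have fy_cont: "continuous (at (t, x t) within {0..} \<times> UNIV) (\<lambda>(s, a). fy s a)"
  proof -
    have "continuous_on ({0..} \<times> UNIV) (\<lambda>p. integral (cbox (-h) 0) (\<lambda>\<theta>. ga (snd p) (fst p + \<theta>)))"
    proof (rule integral_continuous_on_param)
      show "continuous_on (({0..} \<times> UNIV) \<times> cbox (-h) 0) (\<lambda>(p, \<theta>). ga (snd p) (fst p + \<theta>))"
      proof -
        have c: "continuous_on (({0..} \<times> UNIV) \<times> {-h..0}) (\<lambda>q::(real \<times> (real^'n)) \<times> real. (snd (fst q), fst (fst q) + snd q))"
          by (intro continuous_intros)
        have i: "(\<lambda>q::(real \<times> (real^'n)) \<times> real. (snd (fst q), fst (fst q) + snd q)) ` (({0..} \<times> UNIV) \<times> {-h..0}) \<subseteq> UNIV \<times> {-h..}"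
          by auto
        show ?thesis using continuous_on_compose2[OF gac c i] by (auto simp: split_beta)
      qed
    qed
    then have "continuous_on ({0..} \<times> UNIV) (\<lambda>(s, a). fy s a)"
      unfolding fy_def by (simp add: split_beta)
    then show ?thesis using t
      by (simp add: continuous_on_eq_continuous_within)
  qed
  have J: "((\<lambda>(s, a). \<Phi> s a) has_derivative
      (\<lambda>(ds, da). ds *\<^sub>R (g (x t) t - g (x t) (t-h)) + blinfun_apply (fy t (x t)) da))
      (at (t, x t) within {0..} \<times> UNIV)"
    by (rule has_derivative_partialsI[OF fx fy fy_cont]) auto
  have P: "((\<lambda>s. (s, x s)) has_derivative (\<lambda>d. (d, d *\<^sub>R y))) (at t within {0..})"
    using xd unfolding has_vector_derivative_def
    by (auto intro!: derivative_eq_intros)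
  have J': "((\<lambda>(s, a). \<Phi> s a) has_derivative
      (\<lambda>(ds, da). ds *\<^sub>R (g (x t) t - g (x t) (t-h)) + blinfun_apply (fy t (x t)) da))
      (at ((\<lambda>s. (s, x s)) t) within (\<lambda>s. (s, x s)) ` {0..})"
    using J by (rule has_derivative_subset) auto
  from diff_chain_within[OF P J']
  have "((\<lambda>s. \<Phi> s (x s)) has_derivative
      (\<lambda>d. d *\<^sub>R (g (x t) t - g (x t) (t-h) + blinfun_apply (fy t (x t)) y))) (at t within {0..})"
    by (simp add: o_def blinfun.scaleR_right scaleR_right_distrib)
  then show ?thesis unfolding has_vector_derivative_def \<Phi>_def fy_def .
qed

lemma bb_mv: "bounded_bilinear (\<lambda>(M::real^'n^'m) (v::real^'n). M *v v)"
proof -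
  have "bilinear (\<lambda>(M::real^'n^'m) (v::real^'n). M *v v)"
    unfolding bilinear_def
  proof safe
    fix v :: "real^'n"
    show "linear (\<lambda>M::real^'n^'m. M *v v)"
      by (rule linearI) (simp_all add: vec_eq_iff matrix_vector_mult_def sum_distrib_left algebra_simps sum.distrib)
  next
    fix M :: "real^'n^'m"
    show "linear ((*v) M)" by (rule matrix_vector_mul_linear)
  qed
  then show ?thesis by (simp add: bilinear_conv_bounded_bilinear)
qed

definition mblin :: "real^'n^'m \<Rightarrow> (real^'n) \<Rightarrow>\<^sub>L (real^'m)" where
  "mblin M = Blinfun ((*v) M)"

lemma mblin_apply[simp]: "blinfun_apply (mblin M) v = M *v v"
  by (simp add: mblin_def bounded_linear_Blinfun_apply)

lemma norm_mblin: "norm (mblin M) = onorm ((*v) M)"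
  by (simp add: mblin_def norm_blinfun.rep_eq bounded_linear_Blinfun_apply)

lemma bl_mblin: "bounded_linear (mblin :: real^'n^'m \<Rightarrow> _)"
proof -
  interpret bb: bounded_bilinear "\<lambda>(M::real^'n^'m) (v::real^'n). M *v v" by (rule bb_mv)
  obtain K where K: "\<And>M v. norm ((M::real^'n^'m) *v (v::real^'n)) \<le> norm M * norm v * K"
    using bb.bounded by blast
  show ?thesis
  proof (rule bounded_linearI')
    show "mblin (x + y) = mblin x + mblin y" for x y :: "real^'n^'m"
      by (rule blinfun_eqI) (simp add: matrix_vector_mult_add_rdistrib blinfun.add_left)
    show "mblin (c *\<^sub>R x) = c *\<^sub>R mblin x" for c and x :: "real^'n^'m"
      by (rule blinfun_eqI) (simp add: bb.scaleR_left blinfun.scaleR_left)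
  qed
qed

lemma continuous_on_mblin: "continuous_on S M \<Longrightarrow> continuous_on S (\<lambda>u. mblin (M u))"
  using bounded_linear.continuous_on[OF bl_mblin] by blast

lemma norm_mv_le: "norm ((M::real^'n^'m) *v v) \<le> onorm ((*v) M) * norm v"
  using onorm[OF matrix_vector_mul_bounded_linear] by blast

lemma Lmat_deriv:
  fixes B :: "real \<Rightarrow> real^'n^'n"
  assumes B: "continuous_on {0..} B" and h: "h > 0" and t: "t \<ge> 0"
  shows "((\<lambda>s. Lmat h B \<epsilon> s) has_vector_derivative (B (t+h) - \<epsilon> *\<^sub>R Lmat h B \<epsilon> t)) (at t within {0..})"
proof -
  define G where "G r = integral {0..r} (\<lambda>u. exp (\<epsilon> * u) *\<^sub>R B u)" for r
  have eq: "Lmat h B \<epsilon> s = exp (- \<epsilon> * (s + h)) *\<^sub>R G (s + h)" for s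
  proof -
    have "(\<lambda>u. exp (- \<epsilon> * (s + h - u)) *\<^sub>R B u) = (\<lambda>u. exp (- \<epsilon> * (s + h)) *\<^sub>R (exp (\<epsilon> * u) *\<^sub>R B u))"
      by (rule ext) (simp add: exp_add[symmetric] algebra_simps)
    then show ?thesis unfolding Lmat_def G_def by (simp del: scaleR_scaleR add: integral_cmul)
  qed
  have ce: "continuous_on {0..} (\<lambda>u. exp (\<epsilon> * u) *\<^sub>R B u)"
    using B by (intro continuous_intros) auto
  have G1: "(G has_vector_derivative exp (\<epsilon> * (t+h)) *\<^sub>R B (t+h)) (at (t+h) within {0..})"
    unfolding G_def using ftc_within[OF ce, of "t+h"] t h by simp
  have G2: "(G has_vector_derivative exp (\<epsilon> * (t+h)) *\<^sub>R B (t+h)) (at ((\<lambda>s. s + h) t) within (\<lambda>s. s + h) ` {0..})"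
    using G1 by (rule has_vector_derivative_within_subset) (use h in auto)
  have d1: "((\<lambda>s. s + h) has_vector_derivative 1) (at t within {0..})"
    by (auto intro!: derivative_eq_intros)
  from vector_diff_chain_within[OF d1 G2]
  have G3: "((\<lambda>s. G (s + h)) has_vector_derivative exp (\<epsilon> * (t+h)) *\<^sub>R B (t+h)) (at t within {0..})"
    by (simp add: o_def)
  have E: "((\<lambda>s. exp (- \<epsilon> * (s + h))) has_real_derivative (- \<epsilon> * exp (- \<epsilon> * (t + h)))) (at t within {0..})"
    by (auto intro!: derivative_eq_intros)
  have "((\<lambda>s. exp (- \<epsilon> * (s + h)) *\<^sub>R G (s + h)) has_vector_derivative
      exp (- \<epsilon> * (t + h)) *\<^sub>R (exp (\<epsilon> * (t+h)) *\<^sub>R B (t+h)) + (- \<epsilon> * exp (- \<epsilon> * (t + h))) *\<^sub>R G (t + h))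
      (at t within {0..})"
    using has_vector_derivative_scaleR[OF E G3] by simp
  moreover have "exp (- \<epsilon> * (t + h)) *\<^sub>R (exp (\<epsilon> * (t+h)) *\<^sub>R B (t+h)) + (- \<epsilon> * exp (- \<epsilon> * (t + h))) *\<^sub>R G (t + h)
      = B (t+h) - \<epsilon> *\<^sub>R Lmat h B \<epsilon> t"
  proof -
    have "exp (- \<epsilon> * (t + h)) * exp (\<epsilon> * (t+h)) = 1" by (simp add: exp_add[symmetric])
    then show ?thesis by (simp add: eq algebra_simps)
  qed
  ultimately show ?thesis unfolding eq by simp
qed

lemma vfun_deriv:
  fixes f Q :: "real^'n \<Rightarrow> real^'n \<Rightarrow> real^'n"
    and f1 f2 Q1 Q2 :: "real^'n \<Rightarrow> real^'n \<Rightarrow> (real^'n) \<Rightarrow>\<^sub>L (real^'n)"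
    and B :: "real \<Rightarrow> real^'n^'n"
    and V :: "real^'n \<Rightarrow> real" and V' :: "real^'n \<Rightarrow> real^'n"
    and V'' :: "real^'n \<Rightarrow> (real^'n) \<Rightarrow>\<^sub>L (real^'n)"
    and x :: "real \<Rightarrow> real^'n"
  assumes h: "h > 0" and t: "t \<ge> 0"
    and f_deriv: "\<And>a b. ((\<lambda>p. f (fst p) (snd p)) has_derivative
                     (\<lambda>u. blinfun_apply (f1 a b) (fst u) + blinfun_apply (f2 a b) (snd u))) (at (a, b))"
    and f1_cont: "continuous_on UNIV (\<lambda>p. f1 (fst p) (snd p))"
    and B_cont: "continuous_on {0..} B"
    and Q_deriv: "\<And>a b. ((\<lambda>p. Q (fst p) (snd p)) has_derivative
                     (\<lambda>u. blinfun_apply (Q1 a b) (fst u) + blinfun_apply (Q2 a b) (snd u))) (at (a, b))"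
    and Q1_cont: "continuous_on UNIV (\<lambda>p. Q1 (fst p) (snd p))"
    and V_deriv: "\<And>a. (V has_derivative (\<lambda>u. V' a \<bullet> u)) (at a)"
    and V'_deriv: "\<And>a. (V' has_derivative blinfun_apply (V'' a)) (at a)"
    and sol: "is_solution h f B Q x"
    and kpos: "\<gamma> + \<mu> - 1 > 0"
  defines "a \<equiv> x t" and "b \<equiv> x (t - h)"
    and "y \<equiv> f (x t) (x (t - h)) + B t *v Q (x t) (x (t - h))"
  shows "((\<lambda>s. vfun h f B Q V V' \<gamma> \<mu> w1 w2 \<epsilon> s (state x s)) has_real_derivative
     (V' a \<bullet> y
      + blinfun_apply (V'' a) y \<bullet> (integral {-h..0} (\<lambda>\<theta>. f a (x (t+\<theta>)) + B (t+\<theta>+h) *v Q a (x (t+\<theta>)))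
                                 - Lmat h B \<epsilon> t *v Q a a)
      + V' a \<bullet> ((f a a + B (t+h) *v Q a a) - (f a b + B t *v Q a b)
            + blinfun_apply (integral {-h..0} (\<lambda>\<theta>. f1 a (x (t+\<theta>)) + (mblin (B (t+\<theta>+h)) o\<^sub>L Q1 a (x (t+\<theta>))))) y
            - ((B (t+h) - \<epsilon> *\<^sub>R Lmat h B \<epsilon> t) *v Q a a + Lmat h B \<epsilon> t *v (blinfun_apply (Q1 a a) y + blinfun_apply (Q2 a a) y)))
      + ((w1 + h * w2) * norm a powr (\<gamma> + \<mu> - 1) - w1 * norm b powr (\<gamma> + \<mu> - 1)
         - w2 * integral {-h..0} (\<lambda>\<theta>. norm (x (t+\<theta>)) powr (\<gamma> + \<mu> - 1)))))
     (at t within {0..})"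
proof -
  have xc: "continuous_on {-h..} x" and xd: "(x has_vector_derivative y) (at t within {0..})"
    using sol t unfolding is_solution_def y_def by auto
  have fc: "continuous_on UNIV (\<lambda>p. f (fst p) (snd p))"
  proof (rule has_derivative_continuous_on)
    fix p :: "(real^'n) \<times> (real^'n)"
    show "((\<lambda>p. f (fst p) (snd p)) has_derivative (\<lambda>u. blinfun_apply (f1 (fst p) (snd p)) (fst u) + blinfun_apply (f2 (fst p) (snd p)) (snd u))) (at p within UNIV)"
      using f_deriv[of "fst p" "snd p"] by simp
  qed
  have Qc: "continuous_on UNIV (\<lambda>p. Q (fst p) (snd p))"
  proof (rule has_derivative_continuous_on)
    fix p :: "(real^'n) \<times> (real^'n)"
    show "((\<lambda>p. Q (fst p) (snd p)) has_derivative (\<lambda>u. blinfun_apply (Q1 (fst p) (snd p)) (fst u) + blinfun_apply (Q2 (fst p) (snd p)) (snd u))) (at p within UNIV)"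
      using Q_deriv[of "fst p" "snd p"] by simp
  qed
  \<comment> \<open>continuity of compositions with the solution\<close>
  have cx: "continuous_on (UNIV \<times> {-h..}) (\<lambda>p::(real^'n) \<times> real. (fst p, x (snd p)))"
  proof -
    have "continuous_on (UNIV \<times> {-h..}) (\<lambda>p::(real^'n) \<times> real. x (snd p))"
    proof -
      have c: "continuous_on (UNIV \<times> {-h..}) (\<lambda>p::(real^'n) \<times> real. snd p)" by (intro continuous_intros)
      have i: "(\<lambda>p::(real^'n) \<times> real. snd p) ` (UNIV \<times> {-h..}) \<subseteq> {-h..}" by auto
      show ?thesis using continuous_on_compose2[OF xc c i] .
    qed
    then show ?thesis by (intro continuous_intros)
  qed
  have Bc: "continuous_on (UNIV \<times> {-h..}) (\<lambda>p::(real^'n) \<times> real. B (snd p + h))"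
  proof -
    have c: "continuous_on (UNIV \<times> {-h..}) (\<lambda>p::(real^'n) \<times> real. snd p + h)" by (intro continuous_intros)
    have i: "(\<lambda>p::(real^'n) \<times> real. snd p + h) ` (UNIV \<times> {-h..}) \<subseteq> {0..}" by auto
    show ?thesis using continuous_on_compose2[OF B_cont c i] .
  qed
  have comp: "continuous_on (UNIV \<times> {-h..}) (\<lambda>p::(real^'n) \<times> real. F (fst p) (x (snd p)))"
    if F: "continuous_on UNIV (\<lambda>p. F (fst p) (snd p))" for F :: "real^'n \<Rightarrow> real^'n \<Rightarrow> 'z::topological_space"
    using continuous_on_compose2[OF F cx] by auto
  interpret mv: bounded_bilinear "\<lambda>(M::real^'n^'n) (v::real^'n). M *v v" by (rule bb_mv)
  define g where "g a u = f a (x u) + B (u+h) *v Q a (x u)" for a u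
  define ga where "ga a u = f1 a (x u) + (mblin (B (u+h)) o\<^sub>L Q1 a (x u))" for a u
  have gc: "continuous_on (UNIV \<times> {-h..}) (\<lambda>p. g (fst p) (snd p))"
    unfolding g_def using comp[OF fc] comp[OF Qc] Bc
    by (intro continuous_intros mv.continuous_on) auto
  have gac: "continuous_on (UNIV \<times> {-h..}) (\<lambda>p. ga (fst p) (snd p))"
    unfolding ga_def using comp[OF f1_cont] comp[OF Q1_cont] continuous_on_mblin[OF Bc]
    by (intro continuous_intros) auto
  have gd: "((\<lambda>a. g a u) has_derivative blinfun_apply (ga a u)) (at a)" if "u \<ge> -h" for a u
  proof -
    have p: "((\<lambda>a. (a, x u)) has_derivative (\<lambda>d. (d, 0))) (at a)"
      by (auto intro!: derivative_eq_intros)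
    have F: "((\<lambda>a. f a (x u)) has_derivative (\<lambda>d. blinfun_apply (f1 a (x u)) d)) (at a)"
      using has_derivative_compose[OF p f_deriv[of a "x u"]] by (simp add: o_def)
    have G: "((\<lambda>a. Q a (x u)) has_derivative (\<lambda>d. blinfun_apply (Q1 a (x u)) d)) (at a)"
      using has_derivative_compose[OF p Q_deriv[of a "x u"]] by (simp add: o_def)
    have G2: "((\<lambda>a. B (u+h) *v Q a (x u)) has_derivative (\<lambda>d. B (u+h) *v blinfun_apply (Q1 a (x u)) d)) (at a)"
      using bounded_linear.has_derivative[OF matrix_vector_mul_bounded_linear G] .
    show ?thesis
    proof -
      have e: "blinfun_apply (f1 a (x u) + (mblin (B (u + h)) o\<^sub>L Q1 a (x u))) =
          (\<lambda>d. blinfun_apply (f1 a (x u)) d + B (u + h) *v blinfun_apply (Q1 a (x u)) d)"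
        by (rule ext) (simp add: blinfun.add_left)
      show ?thesis unfolding g_def ga_def e by (rule has_derivative_add[OF F G2])
    qed
  qed
  have I12: "((\<lambda>s. integral {-h..0} (\<lambda>\<theta>. g (x s) (s+\<theta>))) has_vector_derivative
          (g (x t) t - g (x t) (t-h) + blinfun_apply (integral {-h..0} (\<lambda>\<theta>. ga (x t) (t+\<theta>))) y))
         (at t within {0..})"
    by (rule param_deriv[OF gc gac gd h t xd])
  have xd': "(x has_derivative (\<lambda>d. d *\<^sub>R y)) (at t within {0..})"
    using xd unfolding has_vector_derivative_def .
  have DV: "((\<lambda>s. V (x s)) has_real_derivative V' a \<bullet> y) (at t within {0..})"
    using has_derivative_compose[OF xd' V_deriv[of "x t"]]
    unfolding has_field_derivative_def a_def by (simp add: mult.commute[of _ "V' (x t) \<bullet> y"])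
  have DV': "((\<lambda>s. V' (x s)) has_derivative (\<lambda>d. d *\<^sub>R blinfun_apply (V'' a) y)) (at t within {0..})"
    using has_derivative_compose[OF xd' V'_deriv[of "x t"]]
    unfolding a_def by (simp add: blinfun.scaleR_right)
  have xx: "((\<lambda>s. (x s, x s)) has_derivative (\<lambda>d. (d *\<^sub>R y, d *\<^sub>R y))) (at t within {0..})"
    using xd' by (auto intro!: derivative_eq_intros)
  have DQ: "((\<lambda>s. Q (x s) (x s)) has_derivative
      (\<lambda>d. d *\<^sub>R (blinfun_apply (Q1 a a) y + blinfun_apply (Q2 a a) y))) (at t within {0..})"
    using has_derivative_compose[OF xx Q_deriv[of "x t" "x t"]]
    unfolding a_def by (simp add: blinfun.scaleR_right scaleR_right_distrib)
  have DL: "((\<lambda>s. Lmat h B \<epsilon> s) has_derivative (\<lambda>d. d *\<^sub>R (B (t+h) - \<epsilon> *\<^sub>R Lmat h B \<epsilon> t))) (at t within {0..})"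
    using Lmat_deriv[OF B_cont h t] unfolding has_vector_derivative_def .
  have DLQ: "((\<lambda>s. Lmat h B \<epsilon> s *v Q (x s) (x s)) has_derivative
      (\<lambda>d. d *\<^sub>R ((B (t+h) - \<epsilon> *\<^sub>R Lmat h B \<epsilon> t) *v Q a a
          + Lmat h B \<epsilon> t *v (blinfun_apply (Q1 a a) y + blinfun_apply (Q2 a a) y)))) (at t within {0..})"
    using mv.FDERIV[OF DL DQ] unfolding a_def
    by (simp add: matrix_vector_mult_scaleR mv.scaleR_left scaleR_right_distrib algebra_simps)
  define P where "P s = integral {-h..0} (\<lambda>\<theta>. g (x s) (s+\<theta>)) - Lmat h B \<epsilon> s *v Q (x s) (x s)" for s
  define Pd where "Pd = g (x t) t - g (x t) (t-h) + blinfun_apply (integral {-h..0} (\<lambda>\<theta>. ga (x t) (t+\<theta>))) y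
      - ((B (t+h) - \<epsilon> *\<^sub>R Lmat h B \<epsilon> t) *v Q a a
          + Lmat h B \<epsilon> t *v (blinfun_apply (Q1 a a) y + blinfun_apply (Q2 a a) y))"
  have DP: "(P has_derivative (\<lambda>d. d *\<^sub>R Pd)) (at t within {0..})"
    using has_derivative_diff[OF I12[unfolded has_vector_derivative_def] DLQ]
    unfolding P_def Pd_def by (simp add: scaleR_diff_right)
  have DVP: "((\<lambda>s. V' (x s) \<bullet> P s) has_real_derivative (blinfun_apply (V'' a) y \<bullet> P t + V' a \<bullet> Pd)) (at t within {0..})"
  proof -
    have e: "(\<lambda>d. V' (x t) \<bullet> (d *\<^sub>R Pd) + (d *\<^sub>R blinfun_apply (V'' (x t)) y) \<bullet> P t)
       = (*) (blinfun_apply (V'' (x t)) y \<bullet> P t + V' (x t) \<bullet> Pd)"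
      by (rule ext) (simp add: algebra_simps)
    show ?thesis
      using has_derivative_inner[OF DV' DP] unfolding has_field_derivative_def a_def e .
  qed
  define k where "k = \<gamma> + \<mu> - 1"
  define n where "n u = norm (x u) powr k" for u
  define m where "m u = u * n u" for u
  have nc: "continuous_on {-h..} n"
    unfolding n_def using kpos xc unfolding k_def
    by (intro continuous_on_powr') (auto intro!: continuous_intros)
  have mc: "continuous_on {-h..} m"
    unfolding m_def using nc by (intro continuous_intros)
  have J0: "((\<lambda>s. integral {-h..0} (\<lambda>\<theta>. n (s+\<theta>))) has_real_derivative n t - n (t-h)) (at t within {0..})"
    using shift_deriv[OF nc h t] unfolding has_real_derivative_iff_has_vector_derivative .
  have J1: "((\<lambda>s. integral {-h..0} (\<lambda>\<theta>. m (s+\<theta>))) has_real_derivative m t - m (t-h)) (at t within {0..})"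
    using shift_deriv[OF mc h t] unfolding has_real_derivative_iff_has_vector_derivative .
  define I3 where "I3 s = integral {-h..0} (\<lambda>\<theta>. (w1 + (h + \<theta>) * w2) * n (s+\<theta>))" for s
  have I3alt: "I3 s = (w1 + h*w2 - s*w2) * integral {-h..0} (\<lambda>\<theta>. n (s+\<theta>)) + w2 * integral {-h..0} (\<lambda>\<theta>. m (s+\<theta>))"
    if "s \<in> {0..}" for s
  proof -
    have c1: "continuous_on {-h..0} (\<lambda>\<theta>. n (s+\<theta>))"
    proof -
      have c: "continuous_on {-h..0} (\<lambda>\<theta>. s+\<theta>)" by (intro continuous_intros)
      show ?thesis using continuous_on_compose2[OF nc c] that by (auto simp: image_subset_iff)
    qed
    have c2: "continuous_on {-h..0} (\<lambda>\<theta>. m (s+\<theta>))"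
    proof -
      have c: "continuous_on {-h..0} (\<lambda>\<theta>. s+\<theta>)" by (intro continuous_intros)
      show ?thesis using continuous_on_compose2[OF mc c] that by (auto simp: image_subset_iff)
    qed
    have i1: "(\<lambda>\<theta>. (w1 + h*w2 - s*w2) * n (s+\<theta>)) integrable_on {-h..0}"
      using c1 by (intro integrable_continuous_interval continuous_intros)
    have i2: "(\<lambda>\<theta>. w2 * m (s+\<theta>)) integrable_on {-h..0}"
      using c2 by (intro integrable_continuous_interval continuous_intros)
    have "I3 s = integral {-h..0} (\<lambda>\<theta>. (w1 + h*w2 - s*w2) * n (s+\<theta>) + w2 * m (s+\<theta>))"
      unfolding I3_def m_def by (rule integral_cong) (simp add: algebra_simps)
    also have "\<dots> = integral {-h..0} (\<lambda>\<theta>. (w1 + h*w2 - s*w2) * n (s+\<theta>)) + integral {-h..0} (\<lambda>\<theta>. w2 * m (s+\<theta>))"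
      by (rule integral_add[OF i1 i2])
    finally show ?thesis by simp
  qed
  have DI3': "((\<lambda>s. (w1 + h*w2 - s*w2) * integral {-h..0} (\<lambda>\<theta>. n (s+\<theta>)) + w2 * integral {-h..0} (\<lambda>\<theta>. m (s+\<theta>)))
      has_real_derivative ((w1 + h * w2) * n t - w1 * n (t-h) - w2 * integral {-h..0} (\<lambda>\<theta>. n (t+\<theta>)))) (at t within {0..})"
  proof -
    have "((\<lambda>s. (w1 + h*w2 - s*w2) * integral {-h..0} (\<lambda>\<theta>. n (s+\<theta>)) + w2 * integral {-h..0} (\<lambda>\<theta>. m (s+\<theta>)))
      has_real_derivative ((- w2) * integral {-h..0} (\<lambda>\<theta>. n (t+\<theta>)) + (w1 + h*w2 - t*w2) * (n t - n (t-h)) + w2 * (m t - m (t-h)))) (at t within {0..})"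
      by (auto intro!: derivative_eq_intros J0 J1)
    moreover have "(- w2) * integral {-h..0} (\<lambda>\<theta>. n (t+\<theta>)) + (w1 + h*w2 - t*w2) * (n t - n (t-h)) + w2 * (m t - m (t-h))
        = (w1 + h * w2) * n t - w1 * n (t-h) - w2 * integral {-h..0} (\<lambda>\<theta>. n (t+\<theta>))"
      unfolding m_def by (simp add: algebra_simps)
    ultimately show ?thesis by (metis (no_types, lifting))
  qed
  have DI3: "(I3 has_real_derivative ((w1 + h * w2) * n t - w1 * n (t-h) - w2 * integral {-h..0} (\<lambda>\<theta>. n (t+\<theta>)))) (at t within {0..})"
    using DI3' unfolding has_real_derivative_iff_has_vector_derivative
    by (rule has_vector_derivative_transform[rotated 2]) (use t I3alt in auto)
  have DALL: "((\<lambda>s. V (x s) + V' (x s) \<bullet> P s + I3 s) has_real_derivative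
      (V' a \<bullet> y + (blinfun_apply (V'' a) y \<bullet> P t + V' a \<bullet> Pd)
       + ((w1 + h * w2) * n t - w1 * n (t-h) - w2 * integral {-h..0} (\<lambda>\<theta>. n (t+\<theta>))))) (at t within {0..})"
    by (intro DERIV_add DV DVP DI3)
  have fun_eq: "(\<lambda>s. vfun h f B Q V V' \<gamma> \<mu> w1 w2 \<epsilon> s (state x s)) = (\<lambda>s. V (x s) + V' (x s) \<bullet> P s + I3 s)"
    by (rule ext) (simp add: vfun_def state_def P_def I3_def g_def n_def k_def add.assoc)
  show ?thesis
    unfolding fun_eq
    using DALL unfolding P_def Pd_def g_def ga_def n_def k_def a_def b_def
    by (simp add: algebra_simps)
qed

lemma int_bound:
  fixes G :: "real \<Rightarrow> 'a::banach"
  assumes gi: "g integrable_on {lo..hi}" and c: "c \<ge> 0"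
    and le: "\<And>\<theta>. \<theta> \<in> {lo..hi} \<Longrightarrow> c * norm (G \<theta>) \<le> g \<theta>"
  shows "c * norm (integral {lo..hi} G) \<le> integral {lo..hi} g"
proof -
  have "c * norm (integral {lo..hi} G) = norm (integral {lo..hi} (\<lambda>\<theta>. c *\<^sub>R G \<theta>))"
    using c by simp
  also have "\<dots> \<le> integral {lo..hi} g"
  proof (cases "(\<lambda>\<theta>. c *\<^sub>R G \<theta>) integrable_on {lo..hi}")
    case True
    show ?thesis
      by (rule Henstock_Kurzweil_Integration.integral_norm_bound_integral[OF True gi]) (use le c in auto)
  next
    case False
    then have z: "integral {lo..hi} (\<lambda>\<theta>. c *\<^sub>R G \<theta>) = 0" by (rule not_integrable_integral)
    have g0: "0 \<le> g \<theta>" if "\<theta> \<in> {lo..hi}" for \<theta>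
    proof -
      have "0 \<le> c * norm (G \<theta>)" using c by simp
      also have "\<dots> \<le> g \<theta>" by (rule le[OF that])
      finally show ?thesis .
    qed
    have "0 \<le> integral {lo..hi} g"
      by (rule Henstock_Kurzweil_Integration.integral_nonneg[OF gi g0])
    then show ?thesis unfolding z by simp
  qed
  finally show ?thesis .
qed

lemma pw_le: "0 \<le> u \<Longrightarrow> u \<le> M \<Longrightarrow> 0 \<le> e \<Longrightarrow> u powr e \<le> M powr (e::real)"
  by (rule powr_mono2)

lemma pw_exc:
  fixes M \<delta> d K :: real
  assumes "0 \<le> M" "M \<le> \<delta>" "0 \<le> d"
  shows "M powr (K + d) \<le> \<delta> powr d * M powr K"
proof -
  have "M powr (K + d) = M powr K * M powr d" by (rule powr_add)
  also have "\<dots> \<le> M powr K * \<delta> powr d"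
    using assms by (intro mult_left_mono powr_mono2) auto
  finally show ?thesis by (simp add: mult.commute)
qed

lemma pw_lower: "0 \<le> M \<Longrightarrow> M \<le> 1 \<Longrightarrow> e1 \<le> e2 \<Longrightarrow> M powr e2 \<le> M powr (e1::real)"
  by (rule powr_mono')

lemma max3:
  fixes u v w K :: real
  assumes "0 \<le> u" "0 \<le> v" "0 \<le> w"
  shows "max u (max v w) powr K \<le> u powr K + v powr K + w powr K"
proof -
  have a: "u powr K \<ge> 0" "v powr K \<ge> 0" "w powr K \<ge> 0" by auto
  have "max u (max v w) = u \<or> max u (max v w) = v \<or> max u (max v w) = w" by linarith
  then show ?thesis using a by linarith
qed

lemma V''_bound_all:
  fixes V'' :: "real^'n \<Rightarrow> (real^'n) \<Rightarrow>\<^sub>L (real^'n)"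
  assumes V''_cont: "continuous_on UNIV V''"
    and gamma_ge: "\<gamma> \<ge> 2"
    and V''_bound: "\<And>a. a \<noteq> 0 \<Longrightarrow> norm (V'' a) \<le> \<psi> * norm a powr (\<gamma> - 2)"
    and psi: "\<psi> > 0"
    and M: "M > 0" "norm a \<le> M"
  shows "norm (V'' a) \<le> \<psi> * M powr (\<gamma> - 2)"
proof (cases "a = 0")
  case False
  then have "norm (V'' a) \<le> \<psi> * norm a powr (\<gamma> - 2)" by (rule V''_bound)
  also have "\<dots> \<le> \<psi> * M powr (\<gamma> - 2)"
    using M gamma_ge psi by (intro mult_left_mono powr_mono2) auto
  finally show ?thesis .
next
  case True
  define e :: "real^'n" where "e = axis undefined 1"
  have ne: "norm e = 1" unfolding e_def by simp
  have lim: "((\<lambda>c. norm (V'' (c *\<^sub>R e))) \<longlongrightarrow> norm (V'' 0)) (at_right 0)"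
  proof -
    have "isCont V'' 0" using V''_cont by (simp add: continuous_on_eq_continuous_at)
    then have "((\<lambda>c::real. V'' (c *\<^sub>R e)) \<longlongrightarrow> V'' (0 *\<^sub>R e)) (at 0)"
      by (intro isCont_tendsto_compose[where g=V'']) (auto intro!: tendsto_eq_intros)
    then have "((\<lambda>c::real. V'' (c *\<^sub>R e)) \<longlongrightarrow> V'' 0) (at_right 0)"
      by (simp add: filterlim_at_split)
    then show ?thesis by (rule tendsto_norm)
  qed
  have ev: "\<forall>\<^sub>F c in at_right 0. norm (V'' (c *\<^sub>R e)) \<le> \<psi> * M powr (\<gamma> - 2)"
  proof -
    have "\<forall>\<^sub>F c in at_right (0::real). 0 < c \<and> c < M"
      using M by (auto simp: eventually_at_right_field intro: exI[of _ M])
    then show ?thesis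
    proof eventually_elim
      case (elim c)
      then have "c *\<^sub>R e \<noteq> 0" using ne by auto
      then have "norm (V'' (c *\<^sub>R e)) \<le> \<psi> * norm (c *\<^sub>R e) powr (\<gamma> - 2)" by (rule V''_bound)
      also have "\<dots> \<le> \<psi> * M powr (\<gamma> - 2)"
        using elim ne gamma_ge psi by (intro mult_left_mono powr_mono2) auto
      finally show ?case .
    qed
  qed
  have "norm (V'' 0) \<le> \<psi> * M powr (\<gamma> - 2)"
    by (rule tendsto_upperbound[OF lim ev]) simp
  then show ?thesis using True by simp
qed

lemma pwm: "0 \<le> u \<Longrightarrow> u \<le> M \<Longrightarrow> M \<le> 1 \<Longrightarrow> r \<le> e \<Longrightarrow> 0 \<le> r \<Longrightarrow> u powr e \<le> M powr (r::real)"
proof -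
  assume a: "0 \<le> u" "u \<le> M" "M \<le> 1" "r \<le> e" "0 \<le> r"
  have "u powr e \<le> M powr e" using a by (intro powr_mono2) auto
  also have "\<dots> \<le> M powr r" using a by (intro powr_mono') auto
  finally show ?thesis .
qed

lemma max2: "0 \<le> u \<Longrightarrow> 0 \<le> v \<Longrightarrow> max u v powr (K::real) \<le> u powr K + v powr K"
proof -
  assume "0 \<le> u" "0 \<le> v"
  have a: "u powr K \<ge> 0" "v powr K \<ge> 0" by auto
  have "max u v = u \<or> max u v = v" by linarith
  then show ?thesis using a by linarith
qed

lemma int_const_plus:
  fixes f :: "real \<Rightarrow> real"
  assumes fi: "f integrable_on {-h..0}" and h: "h \<ge> 0"
  shows "(\<lambda>\<theta>. C * (\<alpha> + f \<theta>)) integrable_on {-h..0}"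
    and "integral {-h..0} (\<lambda>\<theta>. C * (\<alpha> + f \<theta>)) = C * (h * \<alpha> + integral {-h..0} f)"
proof -
  have ci: "(\<lambda>\<theta>. \<alpha>) integrable_on {-h..0}" by (intro integrable_continuous_interval continuous_intros)
  have ai: "(\<lambda>\<theta>. \<alpha> + f \<theta>) integrable_on {-h..0}" by (rule integrable_add[OF ci fi])
  then show "(\<lambda>\<theta>. C * (\<alpha> + f \<theta>)) integrable_on {-h..0}" by (rule integrable_on_mult_right)
  have "integral {-h..0} (\<lambda>\<theta>. C * (\<alpha> + f \<theta>)) = C * integral {-h..0} (\<lambda>\<theta>. \<alpha> + f \<theta>)"
    by simp
  also have "integral {-h..0} (\<lambda>\<theta>. \<alpha> + f \<theta>) = integral {-h..0} (\<lambda>\<theta>. \<alpha>) + integral {-h..0} f"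
    by (rule integral_add[OF ci fi])
  also have "integral {-h..0} (\<lambda>\<theta>. \<alpha>) = h * \<alpha>" using h by simp
  finally show "integral {-h..0} (\<lambda>\<theta>. C * (\<alpha> + f \<theta>)) = C * (h * \<alpha> + integral {-h..0} f)" .
qed

lemma estimate:
  fixes f Q :: "real^'n \<Rightarrow> real^'n \<Rightarrow> real^'n"
    and f1 f2 Q1 Q2 :: "real^'n \<Rightarrow> real^'n \<Rightarrow> (real^'n) \<Rightarrow>\<^sub>L (real^'n)"
    and B :: "real \<Rightarrow> real^'n^'n"
    and V :: "real^'n \<Rightarrow> real" and V' :: "real^'n \<Rightarrow> real^'n"
    and V'' :: "real^'n \<Rightarrow> (real^'n) \<Rightarrow>\<^sub>L (real^'n)"
    and x :: "real \<Rightarrow> real^'n"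
  assumes h_pos: "h > 0"
    and mu_gt: "\<mu> > 1"
    and m_nonneg: "m1 \<ge> 0" "m2 \<ge> 0" "\<eta>11 \<ge> 0" "\<eta>12 \<ge> 0"
    and f_bound: "\<And>a b. norm (f a b) \<le> m1 * norm a powr \<mu> + m2 * norm b powr \<mu>"
    and f1_bound: "\<And>a b. norm (f1 a b) \<le> \<eta>11 * norm a powr (\<mu> - 1) + \<eta>12 * norm b powr (\<mu> - 1)"
    and bh: "bh \<ge> 0"
    and B_bound: "\<And>t. t \<ge> 0 \<Longrightarrow> onorm ((*v) (B t)) \<le> bh"
    and sigma_gt: "\<sigma> > 1"
    and p_nonneg: "p1 \<ge> 0" "p2 \<ge> 0" "q11 \<ge> 0" "q12 \<ge> 0" "q21 \<ge> 0" "q22 \<ge> 0"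
    and Q_bound: "\<And>a b. norm (Q a b) \<le> p1 * norm a powr \<sigma> + p2 * norm b powr \<sigma>"
    and Q1_bound: "\<And>a b. norm (Q1 a b) \<le> q11 * norm a powr (\<sigma> - 1) + q12 * norm b powr (\<sigma> - 1)"
    and Q2_bound: "\<And>a b. norm (Q2 a b) \<le> q21 * norm a powr (\<sigma> - 1) + q22 * norm b powr (\<sigma> - 1)"
    and V''_cont: "continuous_on UNIV V''"
    and gamma_ge: "\<gamma> \<ge> 2"
    and pos: "\<beta> > 0" "\<psi> > 0"
    and V_decr: "\<And>a. V' a \<bullet> f a a \<le> - w * norm a powr (\<gamma> + \<mu> - 1)"
    and V'_bound: "\<And>a. norm (V' a) \<le> \<beta> * norm a powr (\<gamma> - 1)"
    and V''_bound: "\<And>a. a \<noteq> 0 \<Longrightarrow> norm (V'' a) \<le> \<psi> * norm a powr (\<gamma> - 2)"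
    and d0pos: "2 * min \<mu> \<sigma> - \<mu> - 1 > 0"
    and delta: "0 < \<delta>" "\<delta> \<le> 1"
    and t: "t \<ge> 0"
    and xc: "continuous_on {-h..} x"
    and xb: "\<forall>\<theta>\<in>{-h..0}. norm (x (t + \<theta>)) \<le> \<delta>"
    and Lb: "\<And>q. norm (Lmat h B \<epsilon> t *v q) \<le> l * norm q" and l: "l \<ge> 0"
    and Eb: "\<And>q. norm ((\<epsilon> *\<^sub>R Lmat h B \<epsilon> t) *v q) \<le> \<omega> * norm q" and om: "\<omega> \<ge> 0"
    and omc: "\<omega> = 0 \<or> \<mu> \<le> \<sigma>"
  defines "a \<equiv> x t" and "b \<equiv> x (t - h)"
    and "y \<equiv> f (x t) (x (t - h)) + B t *v Q (x t) (x (t - h))"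
  shows "V' a \<bullet> y
      + blinfun_apply (V'' a) y \<bullet> (integral {-h..0} (\<lambda>\<theta>. f a (x (t+\<theta>)) + B (t+\<theta>+h) *v Q a (x (t+\<theta>)))
                                 - Lmat h B \<epsilon> t *v Q a a)
      + V' a \<bullet> ((f a a + B (t+h) *v Q a a) - (f a b + B t *v Q a b)
            + blinfun_apply (integral {-h..0} (\<lambda>\<theta>. f1 a (x (t+\<theta>)) + (mblin (B (t+\<theta>+h)) o\<^sub>L Q1 a (x (t+\<theta>))))) y
            - ((B (t+h) - \<epsilon> *\<^sub>R Lmat h B \<epsilon> t) *v Q a a + Lmat h B \<epsilon> t *v (blinfun_apply (Q1 a a) y + blinfun_apply (Q2 a a) y)))
      + ((w1 + h * w2) * norm a powr (\<gamma> + \<mu> - 1) - w1 * norm b powr (\<gamma> + \<mu> - 1)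
         - w2 * integral {-h..0} (\<lambda>\<theta>. norm (x (t+\<theta>)) powr (\<gamma> + \<mu> - 1)))
    \<le> - (w - w1 - h * w2) * norm a powr (\<gamma> + \<mu> - 1) - w1 * norm b powr (\<gamma> + \<mu> - 1)
         - w2 * integral {-h..0} (\<lambda>\<theta>. norm (x (t+\<theta>)) powr (\<gamma> + \<mu> - 1))
       + (((\<beta> * (m1 + m2 + bh * (p1 + p2)) * (\<eta>11 + \<eta>12 + bh * (q11 + q12))
            + \<psi> * (m1 + m2 + bh * (p1 + p2)) * (m1 + m2 + bh * (p1 + p2))) * (1 + h)
          + \<psi> * (m1 + m2 + bh * (p1 + p2)) * l * (p1 + p2)
          + \<beta> * l * (q11 + q12 + q21 + q22) * (m1 + m2 + bh * (p1 + p2))) * \<delta> powr (2 * min \<mu> \<sigma> - \<mu> - 1)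
         + \<beta> * (p1 + p2) * \<omega>)
        * (norm a powr (\<gamma> + \<mu> - 1) + norm b powr (\<gamma> + \<mu> - 1)
           + integral {-h..0} (\<lambda>\<theta>. norm (x (t+\<theta>)) powr (\<gamma> + \<mu> - 1)))"
proof -
  define K where "K = \<gamma> + \<mu> - 1"
  define \<rho> where "\<rho> = min \<mu> \<sigma>"
  define d0 where "d0 = 2 * \<rho> - \<mu> - 1"
  define \<Delta> where "\<Delta> = \<delta> powr d0"
  define Cy where "Cy = m1 + m2 + bh * (p1 + p2)"
  define CG where "CG = \<eta>11 + \<eta>12 + bh * (q11 + q12)"
  define qq where "qq = q11 + q12 + q21 + q22"
  define A where "A = norm a"
  define Bn where "Bn = norm b"
  define M0 where "M0 = max A Bn"
  define n where "n \<theta> = norm (x (t+\<theta>)) powr K" for \<theta>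
  define J0 where "J0 = integral {-h..0} n"
  define S where "S = A powr K + Bn powr K + J0"
  have rho: "1 < \<rho>" "\<rho> \<le> \<mu>" "\<rho> \<le> \<sigma>" using mu_gt sigma_gt unfolding \<rho>_def by auto
  have d0: "d0 > 0" using d0pos unfolding d0_def \<rho>_def by simp
  have Kpos: "K > 0" using gamma_ge mu_gt unfolding K_def by simp
  have KD: "K + d0 = \<gamma> - 2 + \<rho> + \<rho>" "K + d0 = \<gamma> - 1 + \<rho> + (\<rho> - 1)" unfolding K_def d0_def by simp_all
  have Cy0: "Cy \<ge> 0" "CG \<ge> 0" "qq \<ge> 0" using m_nonneg p_nonneg bh unfolding Cy_def CG_def qq_def by auto
  have Dl0: "\<Delta> \<ge> 0" unfolding \<Delta>_def by simp
  have A0: "0 \<le> A" "A \<le> \<delta>" using xb h_pos unfolding A_def a_def by (auto dest: bspec[of _ _ 0])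
  have B0: "0 \<le> Bn" "Bn \<le> \<delta>" using xb h_pos unfolding Bn_def b_def by (auto dest: bspec[of _ _ "-h"])
  have M0b: "0 \<le> M0" "M0 \<le> \<delta>" "M0 \<le> 1" "A \<le> M0" "Bn \<le> M0" using A0 B0 delta unfolding M0_def by auto
  \<comment> \<open>continuity / integrability of n\<close>
  have nc: "continuous_on {-h..0} n"
  proof -
    have c: "continuous_on {-h..0} (\<lambda>\<theta>. t + \<theta>)" by (intro continuous_intros)
    have i: "(\<lambda>\<theta>. t + \<theta>) ` {-h..0} \<subseteq> {-h..}" using t by auto
    have "continuous_on {-h..0} (\<lambda>\<theta>. x (t + \<theta>))" using continuous_on_compose2[OF xc c i] .
    then show ?thesis unfolding n_def using Kpos
      by (intro continuous_on_powr') (auto intro!: continuous_intros)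
  qed
  have ni: "n integrable_on {-h..0}" using nc by (rule integrable_continuous_interval)
  have J00: "J0 \<ge> 0" unfolding J0_def
    by (rule Henstock_Kurzweil_Integration.integral_nonneg[OF ni]) (simp add: n_def)
  have S0: "S \<ge> 0" unfolding S_def using J00 by simp
  have M0K: "M0 powr K \<le> S"
    using max2[of A Bn K] A0 B0 J00 unfolding M0_def S_def by simp
  \<comment> \<open>basic power estimates\<close>
  have pA: "A powr e \<le> M0 powr \<rho>" "Bn powr e \<le> M0 powr \<rho>" if "\<rho> \<le> e" for e
    using that rho M0b A0 B0 by (auto intro!: pwm)
  have pA1: "A powr e \<le> M0 powr (\<rho> - 1)" "Bn powr e \<le> M0 powr (\<rho> - 1)" if "\<rho> - 1 \<le> e" for e
    using that rho M0b A0 B0 by (auto intro!: pwm)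
  have Bt: "norm (B s *v v) \<le> bh * norm v" if "s \<ge> 0" for s v
  proof -
    have "norm (B s *v v) \<le> onorm ((*v) (B s)) * norm v" by (rule norm_mv_le)
    also have "\<dots> \<le> bh * norm v" using B_bound[OF that] by (intro mult_right_mono) auto
    finally show ?thesis .
  qed
  have fab: "norm (f a b) \<le> (m1 + m2) * M0 powr \<rho>"
  proof -
    have "norm (f a b) \<le> m1 * A powr \<mu> + m2 * Bn powr \<mu>" using f_bound unfolding A_def Bn_def .
    also have "\<dots> \<le> m1 * M0 powr \<rho> + m2 * M0 powr \<rho>"
      using pA[of \<mu>] rho m_nonneg by (intro add_mono mult_left_mono) auto
    finally show ?thesis by (simp add: algebra_simps)
  qed
  have Qab: "norm (Q a b) \<le> (p1 + p2) * M0 powr \<rho>"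
  proof -
    have "norm (Q a b) \<le> p1 * A powr \<sigma> + p2 * Bn powr \<sigma>" using Q_bound unfolding A_def Bn_def .
    also have "\<dots> \<le> p1 * M0 powr \<rho> + p2 * M0 powr \<rho>"
      using pA[of \<sigma>] rho p_nonneg by (intro add_mono mult_left_mono) auto
    finally show ?thesis by (simp add: algebra_simps)
  qed
  have Qaa: "norm (Q a a) \<le> (p1 + p2) * M0 powr \<rho>"
  proof -
    have "norm (Q a a) \<le> p1 * A powr \<sigma> + p2 * A powr \<sigma>" using Q_bound unfolding A_def .
    also have "\<dots> \<le> p1 * M0 powr \<rho> + p2 * M0 powr \<rho>"
      using pA[of \<sigma>] rho p_nonneg by (intro add_mono mult_left_mono) auto
    finally show ?thesis by (simp add: algebra_simps)
  qed
  have Qaa\<sigma>: "norm (Q a a) \<le> (p1 + p2) * M0 powr \<sigma>"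
  proof -
    have "norm (Q a a) \<le> p1 * A powr \<sigma> + p2 * A powr \<sigma>" using Q_bound unfolding A_def .
    also have "\<dots> \<le> p1 * M0 powr \<sigma> + p2 * M0 powr \<sigma>"
      using M0b A0 rho p_nonneg by (intro add_mono mult_left_mono powr_mono2) auto
    finally show ?thesis by (simp add: algebra_simps)
  qed
  have Q12aa: "norm (Q1 a a) + norm (Q2 a a) \<le> qq * M0 powr (\<rho> - 1)"
  proof -
    have "norm (Q1 a a) + norm (Q2 a a) \<le> (q11 * A powr (\<sigma> - 1) + q12 * A powr (\<sigma> - 1)) + (q21 * A powr (\<sigma> - 1) + q22 * A powr (\<sigma> - 1))"
      using Q1_bound[of a a] Q2_bound[of a a] unfolding A_def by (intro add_mono)
    also have "\<dots> \<le> (q11 * M0 powr (\<rho> - 1) + q12 * M0 powr (\<rho> - 1)) + (q21 * M0 powr (\<rho> - 1) + q22 * M0 powr (\<rho> - 1))"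
      using pA1[of "\<sigma> - 1"] rho p_nonneg by (intro add_mono mult_left_mono) auto
    finally show ?thesis unfolding qq_def by (simp add: algebra_simps)
  qed
  have ny: "norm y \<le> Cy * M0 powr \<rho>"
  proof -
    have "norm y \<le> norm (f a b) + norm (B t *v Q a b)" unfolding y_def a_def b_def by (rule norm_triangle_ineq)
    also have "\<dots> \<le> (m1 + m2) * M0 powr \<rho> + bh * ((p1 + p2) * M0 powr \<rho>)"
      using fab Bt[OF t, of "Q a b"] Qab bh by (intro add_mono) (auto intro: order_trans mult_left_mono)
    finally show ?thesis unfolding Cy_def by (simp add: algebra_simps)
  qed
  have nVa: "norm (V' a) \<le> \<beta> * M0 powr (\<gamma> - 1)"
  proof -
    have "norm (V' a) \<le> \<beta> * A powr (\<gamma> - 1)" using V'_bound unfolding A_def .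
    also have "\<dots> \<le> \<beta> * M0 powr (\<gamma> - 1)" using pos A0 M0b gamma_ge by (intro mult_left_mono powr_mono2) auto
    finally show ?thesis .
  qed
  have nVy: "norm (V'' a) * norm y \<le> \<psi> * Cy * M0 powr (\<gamma> - 2 + \<rho>)"
  proof (cases "M0 = 0")
    case True
    then have "norm y \<le> 0" using ny by simp
    then show ?thesis using True by simp
  next
    case False
    then have "M0 > 0" using M0b by simp
    then have "norm (V'' a) \<le> \<psi> * M0 powr (\<gamma> - 2)"
      using V''_bound_all[OF V''_cont gamma_ge V''_bound pos(2)] M0b unfolding A_def by blast
    then have "norm (V'' a) * norm y \<le> (\<psi> * M0 powr (\<gamma> - 2)) * (Cy * M0 powr \<rho>)"
      using ny pos by (intro mult_mono) auto
    also have "\<dots> = \<psi> * Cy * M0 powr (\<gamma> - 2 + \<rho>)" by (simp add: powr_add)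
    finally show ?thesis .
  qed
  define Mt where "Mt \<theta> = max A (max Bn (norm (x (t+\<theta>))))" for \<theta>
  have Mt: "0 \<le> Mt \<theta>" "Mt \<theta> \<le> \<delta>" "Mt \<theta> \<le> 1" "M0 \<le> Mt \<theta>" "A \<le> Mt \<theta>" "norm (x (t+\<theta>)) \<le> Mt \<theta>"
    if "\<theta> \<in> {-h..0}" for \<theta>
  proof -
    have "norm (x (t+\<theta>)) \<le> \<delta>" using xb that by auto
    then show "0 \<le> Mt \<theta>" "Mt \<theta> \<le> \<delta>" "Mt \<theta> \<le> 1" "M0 \<le> Mt \<theta>" "A \<le> Mt \<theta>" "norm (x (t+\<theta>)) \<le> Mt \<theta>"
      using A0 B0 delta unfolding Mt_def M0_def by auto
  qed
  have MtK: "Mt \<theta> powr (K + d0) \<le> \<Delta> * ((A powr K + Bn powr K) + n \<theta>)" if "\<theta> \<in> {-h..0}" for \<theta>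
  proof -
    have "Mt \<theta> powr (K + d0) \<le> \<delta> powr d0 * Mt \<theta> powr K"
      using Mt[OF that] d0 by (intro pw_exc) auto
    also have "\<dots> \<le> \<delta> powr d0 * (A powr K + Bn powr K + norm (x (t+\<theta>)) powr K)"
      unfolding Mt_def using A0 B0 by (intro mult_left_mono max3) auto
    finally show ?thesis unfolding \<Delta>_def n_def by (simp add: add.assoc)
  qed
  have M0K': "M0 powr (K + d0) \<le> \<Delta> * S"
  proof -
    have "M0 powr (K + d0) \<le> \<delta> powr d0 * M0 powr K"
      using M0b d0 by (intro pw_exc) auto
    also have "\<dots> \<le> \<delta> powr d0 * S" using M0K by (intro mult_left_mono) auto
    finally show ?thesis unfolding \<Delta>_def .
  qed
  have intS: "integral {-h..0} (\<lambda>\<theta>. C * ((A powr K + Bn powr K) + n \<theta>)) \<le> C * (1 + h) * S"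
    and intSi: "(\<lambda>\<theta>. C * ((A powr K + Bn powr K) + n \<theta>)) integrable_on {-h..0}" if "C \<ge> 0" for C
  proof -
    show "(\<lambda>\<theta>. C * ((A powr K + Bn powr K) + n \<theta>)) integrable_on {-h..0}"
      using int_const_plus(1)[OF ni, of C "A powr K + Bn powr K"] h_pos by simp
    have "integral {-h..0} (\<lambda>\<theta>. C * ((A powr K + Bn powr K) + n \<theta>)) = C * (h * (A powr K + Bn powr K) + J0)"
      unfolding J0_def using int_const_plus(2)[OF ni, of C "A powr K + Bn powr K"] h_pos by simp
    also have "\<dots> \<le> C * ((1 + h) * S)"
      using that h_pos J00 unfolding S_def
      by (intro mult_left_mono) (auto simp: algebra_simps)
    finally show "integral {-h..0} (\<lambda>\<theta>. C * ((A powr K + Bn powr K) + n \<theta>)) \<le> C * (1 + h) * S"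
      by (simp add: mult.assoc)
  qed
  \<comment> \<open>Term with f1, Q1 in the integral\<close>
  define G where "G \<theta> = f1 a (x (t+\<theta>)) + (mblin (B (t+\<theta>+h)) o\<^sub>L Q1 a (x (t+\<theta>)))" for \<theta>
  have nG: "norm (G \<theta>) \<le> CG * Mt \<theta> powr (\<rho> - 1)" if "\<theta> \<in> {-h..0}" for \<theta>
  proof -
    note M = Mt[OF that]
    have "norm (G \<theta>) \<le> norm (f1 a (x (t+\<theta>))) + norm (mblin (B (t+\<theta>+h))) * norm (Q1 a (x (t+\<theta>)))"
      unfolding G_def by (intro order_trans[OF norm_triangle_ineq] add_mono norm_blinfun_compose order_refl)
    also have "\<dots> \<le> (\<eta>11 * Mt \<theta> powr (\<rho> - 1) + \<eta>12 * Mt \<theta> powr (\<rho> - 1)) + bh * (q11 * Mt \<theta> powr (\<rho> - 1) + q12 * Mt \<theta> powr (\<rho> - 1))"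
    proof (intro add_mono mult_mono)
      have "norm (f1 a (x (t+\<theta>))) \<le> \<eta>11 * A powr (\<mu> - 1) + \<eta>12 * norm (x (t+\<theta>)) powr (\<mu> - 1)"
        using f1_bound unfolding A_def .
      also have "\<dots> \<le> \<eta>11 * Mt \<theta> powr (\<rho> - 1) + \<eta>12 * Mt \<theta> powr (\<rho> - 1)"
        using M A0 rho m_nonneg by (intro add_mono mult_left_mono pwm) auto
      finally show "norm (f1 a (x (t+\<theta>))) \<le> \<eta>11 * Mt \<theta> powr (\<rho> - 1) + \<eta>12 * Mt \<theta> powr (\<rho> - 1)" .
      show "norm (mblin (B (t+\<theta>+h))) \<le> bh" unfolding norm_mblin using B_bound that t by auto
      have "norm (Q1 a (x (t+\<theta>))) \<le> q11 * A powr (\<sigma> - 1) + q12 * norm (x (t+\<theta>)) powr (\<sigma> - 1)"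
        using Q1_bound unfolding A_def .
      also have "\<dots> \<le> q11 * Mt \<theta> powr (\<rho> - 1) + q12 * Mt \<theta> powr (\<rho> - 1)"
        using M A0 rho p_nonneg by (intro add_mono mult_left_mono pwm) auto
      finally show "norm (Q1 a (x (t+\<theta>))) \<le> q11 * Mt \<theta> powr (\<rho> - 1) + q12 * Mt \<theta> powr (\<rho> - 1)" .
    qed (use bh in auto)
    finally show ?thesis unfolding CG_def by (simp add: algebra_simps)
  qed
  have T2: "\<bar>V' a \<bullet> blinfun_apply (integral {-h..0} G) y\<bar> \<le> \<beta> * Cy * CG * (1 + h) * \<Delta> * S"
  proof -
    have "\<bar>V' a \<bullet> blinfun_apply (integral {-h..0} G) y\<bar> \<le> norm (V' a) * norm (blinfun_apply (integral {-h..0} G) y)"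
      by (rule Cauchy_Schwarz_ineq2)
    also have "\<dots> \<le> norm (V' a) * (norm (integral {-h..0} G) * norm y)"
      by (intro mult_left_mono norm_blinfun) auto
    also have "\<dots> = (norm (V' a) * norm y) * norm (integral {-h..0} G)" by simp
    also have "\<dots> \<le> integral {-h..0} (\<lambda>\<theta>. (\<beta> * Cy * CG * \<Delta>) * ((A powr K + Bn powr K) + n \<theta>))"
    proof (rule int_bound[OF intSi])
      fix \<theta> assume th: "\<theta> \<in> {-h..0}"
      note M = Mt[OF th]
      have "norm (V' a) * norm y * norm (G \<theta>) \<le> (\<beta> * M0 powr (\<gamma> - 1)) * (Cy * M0 powr \<rho>) * (CG * Mt \<theta> powr (\<rho> - 1))"
        using nVa ny nG[OF th] pos Cy0 by (intro mult_mono) auto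
      also have "\<dots> \<le> (\<beta> * Mt \<theta> powr (\<gamma> - 1)) * (Cy * Mt \<theta> powr \<rho>) * (CG * Mt \<theta> powr (\<rho> - 1))"
        using M M0b pos Cy0 gamma_ge rho by (intro mult_mono mult_left_mono powr_mono2) auto
      also have "\<dots> = \<beta> * Cy * CG * (Mt \<theta> powr (\<gamma> - 1) * Mt \<theta> powr \<rho> * Mt \<theta> powr (\<rho> - 1))"
        by (simp add: algebra_simps)
      also have "\<dots> = \<beta> * Cy * CG * Mt \<theta> powr (K + d0)"
        by (simp only: KD(2) powr_add)
      also have "\<dots> \<le> \<beta> * Cy * CG * (\<Delta> * ((A powr K + Bn powr K) + n \<theta>))"
        using MtK[OF th] pos Cy0 by (intro mult_left_mono) auto
      finally show "norm (V' a) * norm y * norm (G \<theta>) \<le> \<beta> * Cy * CG * \<Delta> * ((A powr K + Bn powr K) + n \<theta>)"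
        by (simp add: mult.assoc)
    qed (use pos Cy0 Dl0 in auto)
    also have "\<dots> \<le> \<beta> * Cy * CG * \<Delta> * (1 + h) * S"
      using pos Cy0 Dl0 by (intro intS) auto
    finally show ?thesis by (simp add: algebra_simps)
  qed
  \<comment> \<open>Term with f, Q in the integral\<close>
  define Fi where "Fi \<theta> = f a (x (t+\<theta>)) + B (t+\<theta>+h) *v Q a (x (t+\<theta>))" for \<theta>
  have nF: "norm (Fi \<theta>) \<le> Cy * Mt \<theta> powr \<rho>" if "\<theta> \<in> {-h..0}" for \<theta>
  proof -
    note M = Mt[OF that]
    have "norm (Fi \<theta>) \<le> norm (f a (x (t+\<theta>))) + bh * norm (Q a (x (t+\<theta>)))"
      unfolding Fi_def using Bt[of "t+\<theta>+h"] that t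
      by (intro order_trans[OF norm_triangle_ineq] add_mono) auto
    also have "\<dots> \<le> (m1 * Mt \<theta> powr \<rho> + m2 * Mt \<theta> powr \<rho>) + bh * (p1 * Mt \<theta> powr \<rho> + p2 * Mt \<theta> powr \<rho>)"
    proof (intro add_mono mult_left_mono)
      have "norm (f a (x (t+\<theta>))) \<le> m1 * A powr \<mu> + m2 * norm (x (t+\<theta>)) powr \<mu>"
        using f_bound unfolding A_def .
      also have "\<dots> \<le> m1 * Mt \<theta> powr \<rho> + m2 * Mt \<theta> powr \<rho>"
        using M A0 rho m_nonneg by (intro add_mono mult_left_mono pwm) auto
      finally show "norm (f a (x (t+\<theta>))) \<le> m1 * Mt \<theta> powr \<rho> + m2 * Mt \<theta> powr \<rho>" .
      have "norm (Q a (x (t+\<theta>))) \<le> p1 * A powr \<sigma> + p2 * norm (x (t+\<theta>)) powr \<sigma>"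
        using Q_bound unfolding A_def .
      also have "\<dots> \<le> p1 * Mt \<theta> powr \<rho> + p2 * Mt \<theta> powr \<rho>"
        using M A0 rho p_nonneg by (intro add_mono mult_left_mono pwm) auto
      finally show "norm (Q a (x (t+\<theta>))) \<le> p1 * Mt \<theta> powr \<rho> + p2 * Mt \<theta> powr \<rho>" .
    qed (use bh in auto)
    finally show ?thesis unfolding Cy_def by (simp add: algebra_simps)
  qed
  have T5: "\<bar>blinfun_apply (V'' a) y \<bullet> integral {-h..0} Fi\<bar> \<le> \<psi> * Cy * Cy * (1 + h) * \<Delta> * S"
  proof -
    have "\<bar>blinfun_apply (V'' a) y \<bullet> integral {-h..0} Fi\<bar> \<le> norm (blinfun_apply (V'' a) y) * norm (integral {-h..0} Fi)"
      by (rule Cauchy_Schwarz_ineq2)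
    also have "\<dots> \<le> (norm (V'' a) * norm y) * norm (integral {-h..0} Fi)"
      by (intro mult_right_mono norm_blinfun) auto
    also have "\<dots> \<le> integral {-h..0} (\<lambda>\<theta>. (\<psi> * Cy * Cy * \<Delta>) * ((A powr K + Bn powr K) + n \<theta>))"
    proof (rule int_bound[OF intSi])
      fix \<theta> assume th: "\<theta> \<in> {-h..0}"
      note M = Mt[OF th]
      have "norm (V'' a) * norm y * norm (Fi \<theta>) \<le> (\<psi> * Cy * M0 powr (\<gamma> - 2 + \<rho>)) * (Cy * Mt \<theta> powr \<rho>)"
        by (rule mult_mono) (use nVy nF[OF th] pos Cy0 in auto)
      also have "\<dots> \<le> (\<psi> * Cy * Mt \<theta> powr (\<gamma> - 2 + \<rho>)) * (Cy * Mt \<theta> powr \<rho>)"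
        using M M0b pos Cy0 gamma_ge rho by (intro mult_mono mult_left_mono powr_mono2) auto
      also have "\<dots> = \<psi> * Cy * Cy * (Mt \<theta> powr (\<gamma> - 2 + \<rho>) * Mt \<theta> powr \<rho>)"
        by (simp add: algebra_simps)
      also have "\<dots> = \<psi> * Cy * Cy * Mt \<theta> powr (K + d0)"
        by (simp only: KD(1) powr_add)
      also have "\<dots> \<le> \<psi> * Cy * Cy * (\<Delta> * ((A powr K + Bn powr K) + n \<theta>))"
        using MtK[OF th] pos Cy0 by (intro mult_left_mono) auto
      finally show "norm (V'' a) * norm y * norm (Fi \<theta>) \<le> \<psi> * Cy * Cy * \<Delta> * ((A powr K + Bn powr K) + n \<theta>)"
        by (simp add: mult.assoc)
    qed (use pos Cy0 Dl0 in auto)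
    also have "\<dots> \<le> \<psi> * Cy * Cy * \<Delta> * (1 + h) * S"
      using pos Cy0 Dl0 by (intro intS) auto
    finally show ?thesis by (simp add: algebra_simps)
  qed
  \<comment> \<open>Term L Q(a,a) with V''\<close>
  have T6: "\<bar>blinfun_apply (V'' a) y \<bullet> (Lmat h B \<epsilon> t *v Q a a)\<bar> \<le> \<psi> * Cy * l * (p1 + p2) * \<Delta> * S"
  proof -
    have "\<bar>blinfun_apply (V'' a) y \<bullet> (Lmat h B \<epsilon> t *v Q a a)\<bar> \<le> norm (blinfun_apply (V'' a) y) * norm (Lmat h B \<epsilon> t *v Q a a)"
      by (rule Cauchy_Schwarz_ineq2)
    also have "\<dots> \<le> (norm (V'' a) * norm y) * (l * norm (Q a a))"
      using Lb by (intro mult_mono norm_blinfun) auto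
    also have "\<dots> \<le> (\<psi> * Cy * M0 powr (\<gamma> - 2 + \<rho>)) * (l * ((p1 + p2) * M0 powr \<rho>))"
      by (rule mult_mono) (use nVy Qaa l pos Cy0 in \<open>auto intro: mult_left_mono\<close>)
    also have "\<dots> = \<psi> * Cy * l * (p1 + p2) * (M0 powr (\<gamma> - 2 + \<rho>) * M0 powr \<rho>)"
      by (simp add: algebra_simps)
    also have "\<dots> = \<psi> * Cy * l * (p1 + p2) * M0 powr (K + d0)"
      by (simp only: KD(1) powr_add)
    also have "\<dots> \<le> \<psi> * Cy * l * (p1 + p2) * (\<Delta> * S)"
      using M0K' pos Cy0 l p_nonneg by (intro mult_left_mono) auto
    finally show ?thesis by (simp add: algebra_simps)
  qed
  \<comment> \<open>Term L (Q1 y + Q2 y) with V'\<close>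
  have T4: "\<bar>V' a \<bullet> (Lmat h B \<epsilon> t *v (blinfun_apply (Q1 a a) y + blinfun_apply (Q2 a a) y))\<bar> \<le> \<beta> * l * qq * Cy * \<Delta> * S"
  proof -
    have "\<bar>V' a \<bullet> (Lmat h B \<epsilon> t *v (blinfun_apply (Q1 a a) y + blinfun_apply (Q2 a a) y))\<bar>
        \<le> norm (V' a) * norm (Lmat h B \<epsilon> t *v (blinfun_apply (Q1 a a) y + blinfun_apply (Q2 a a) y))"
      by (rule Cauchy_Schwarz_ineq2)
    also have "\<dots> \<le> norm (V' a) * (l * ((norm (Q1 a a) + norm (Q2 a a)) * norm y))"
    proof -
      have n1: "norm (blinfun_apply (Q1 a a) y + blinfun_apply (Q2 a a) y) \<le> (norm (Q1 a a) + norm (Q2 a a)) * norm y"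
        using norm_triangle_ineq[of "blinfun_apply (Q1 a a) y" "blinfun_apply (Q2 a a) y"]
          norm_blinfun[of "Q1 a a" y] norm_blinfun[of "Q2 a a" y] by (simp add: algebra_simps)
      have "norm (Lmat h B \<epsilon> t *v (blinfun_apply (Q1 a a) y + blinfun_apply (Q2 a a) y))
          \<le> l * norm (blinfun_apply (Q1 a a) y + blinfun_apply (Q2 a a) y)" by (rule Lb)
      also have "\<dots> \<le> l * ((norm (Q1 a a) + norm (Q2 a a)) * norm y)"
        using n1 l by (rule mult_left_mono)
      finally show ?thesis by (intro mult_left_mono) auto
    qed
    also have "\<dots> \<le> (\<beta> * M0 powr (\<gamma> - 1)) * (l * ((qq * M0 powr (\<rho> - 1)) * (Cy * M0 powr \<rho>)))"
      using nVa Q12aa ny l pos Cy0 by (intro mult_mono mult_left_mono) auto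
    also have "\<dots> = \<beta> * l * qq * Cy * (M0 powr (\<gamma> - 1) * M0 powr \<rho> * M0 powr (\<rho> - 1))"
      by (simp add: algebra_simps)
    also have "\<dots> = \<beta> * l * qq * Cy * M0 powr (K + d0)"
      by (simp only: KD(2) powr_add)
    also have "\<dots> \<le> \<beta> * l * qq * Cy * (\<Delta> * S)"
      using M0K' pos Cy0 l by (intro mult_left_mono) auto
    finally show ?thesis by (simp add: algebra_simps)
  qed
  \<comment> \<open>Term eps L Q(a,a) with V'\<close>
  have T3: "\<bar>V' a \<bullet> ((\<epsilon> *\<^sub>R Lmat h B \<epsilon> t) *v Q a a)\<bar> \<le> \<beta> * (p1 + p2) * \<omega> * S"
  proof -
    have "\<bar>V' a \<bullet> ((\<epsilon> *\<^sub>R Lmat h B \<epsilon> t) *v Q a a)\<bar> \<le> norm (V' a) * norm ((\<epsilon> *\<^sub>R Lmat h B \<epsilon> t) *v Q a a)"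
      by (rule Cauchy_Schwarz_ineq2)
    also have "\<dots> \<le> (\<beta> * M0 powr (\<gamma> - 1)) * (\<omega> * ((p1 + p2) * M0 powr \<sigma>))"
      using nVa Eb Qaa\<sigma> om pos by (intro mult_mono order_trans[OF Eb] mult_left_mono) auto
    also have "\<dots> = \<beta> * (p1 + p2) * \<omega> * (M0 powr (\<gamma> - 1) * M0 powr \<sigma>)"
      by (simp add: algebra_simps)
    also have "\<dots> \<le> \<beta> * (p1 + p2) * \<omega> * S"
    proof (cases "\<omega> = 0")
      case False
      then have "\<mu> \<le> \<sigma>" using omc by simp
      have "M0 powr (\<gamma> - 1) * M0 powr \<sigma> = M0 powr (\<gamma> - 1 + \<sigma>)" by (simp only: powr_add)
      also have "\<dots> \<le> M0 powr K" using M0b \<open>\<mu> \<le> \<sigma>\<close> unfolding K_def by (intro powr_mono') auto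
      also have "\<dots> \<le> S" by (rule M0K)
      finally show ?thesis using pos p_nonneg om by (intro mult_left_mono) auto
    qed simp
    finally show ?thesis .
  qed
  have Geq: "(\<lambda>\<theta>. f1 a (x (t+\<theta>)) + (mblin (B (t+\<theta>+h)) o\<^sub>L Q1 a (x (t+\<theta>)))) = G"
    by (rule ext) (simp add: G_def)
  have Feq: "(\<lambda>\<theta>. f a (x (t+\<theta>)) + B (t+\<theta>+h) *v Q a (x (t+\<theta>))) = Fi"
    by (rule ext) (simp add: Fi_def)
  have yeq: "y = f a b + B t *v Q a b" unfolding y_def a_def b_def ..
  define L where "L = Lmat h B \<epsilon> t"
  define Qy where "Qy = blinfun_apply (Q1 a a) y + blinfun_apply (Q2 a a) y"
  have ident: "V' a \<bullet> y
      + blinfun_apply (V'' a) y \<bullet> (integral {-h..0} Fi - L *v Q a a)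
      + V' a \<bullet> ((f a a + B (t+h) *v Q a a) - (f a b + B t *v Q a b)
            + blinfun_apply (integral {-h..0} G) y
            - ((B (t+h) - \<epsilon> *\<^sub>R L) *v Q a a + L *v Qy))
     = V' a \<bullet> f a a + V' a \<bullet> blinfun_apply (integral {-h..0} G) y + V' a \<bullet> ((\<epsilon> *\<^sub>R L) *v Q a a)
       - V' a \<bullet> (L *v Qy) + blinfun_apply (V'' a) y \<bullet> integral {-h..0} Fi
       - blinfun_apply (V'' a) y \<bullet> (L *v Q a a)"
    unfolding yeq by (simp add: inner_add_right inner_diff_right matrix_vector_mult_diff_rdistrib)
  have Vd: "V' a \<bullet> f a a \<le> - w * A powr K" using V_decr unfolding A_def K_def .
  have sumeq: "(((\<beta> * Cy * CG + \<psi> * Cy * Cy) * (1 + h) + \<psi> * Cy * l * (p1 + p2) + \<beta> * l * qq * Cy) * \<Delta>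
         + \<beta> * (p1 + p2) * \<omega>) * S
      = \<beta> * Cy * CG * (1 + h) * \<Delta> * S + \<psi> * Cy * Cy * (1 + h) * \<Delta> * S + \<psi> * Cy * l * (p1 + p2) * \<Delta> * S
        + \<beta> * l * qq * Cy * \<Delta> * S + \<beta> * (p1 + p2) * \<omega> * S"
    by (simp add: algebra_simps)
  have "- (w - w1 - h * w2) * A powr K = - w * A powr K + (w1 + h * w2) * A powr K"
    by (simp add: algebra_simps)
  have main: "V' a \<bullet> y
      + blinfun_apply (V'' a) y \<bullet> (integral {-h..0} Fi - L *v Q a a)
      + V' a \<bullet> ((f a a + B (t+h) *v Q a a) - (f a b + B t *v Q a b)
            + blinfun_apply (integral {-h..0} G) y
            - ((B (t+h) - \<epsilon> *\<^sub>R L) *v Q a a + L *v Qy))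
      + ((w1 + h * w2) * A powr K - w1 * Bn powr K - w2 * J0)
    \<le> - (w - w1 - h * w2) * A powr K - w1 * Bn powr K - w2 * J0
       + (((\<beta> * Cy * CG + \<psi> * Cy * Cy) * (1 + h) + \<psi> * Cy * l * (p1 + p2) + \<beta> * l * qq * Cy) * \<Delta>
         + \<beta> * (p1 + p2) * \<omega>) * S"
    unfolding ident sumeq using Vd abs_le_D1[OF T2] abs_le_D1[OF T3[folded L_def]] abs_le_D2[OF T4[folded L_def Qy_def]]
      abs_le_D1[OF T5] abs_le_D2[OF T6[folded L_def]]
      \<open>- (w - w1 - h * w2) * A powr K = - w * A powr K + (w1 + h * w2) * A powr K\<close> by linarith
  have eqs: "norm a = A" "norm b = Bn" "\<gamma> + \<mu> - 1 = K" "min \<mu> \<sigma> = \<rho>" "\<delta> powr (2 * \<rho> - \<mu> - 1) = \<Delta>"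
     "m1 + m2 + bh * (p1 + p2) = Cy" "\<eta>11 + \<eta>12 + bh * (q11 + q12) = CG" "q11 + q12 + q21 + q22 = qq"
     "Lmat h B \<epsilon> t = L" "blinfun_apply (Q1 a a) y + blinfun_apply (Q2 a a) y = Qy"
    unfolding A_def Bn_def K_def \<rho>_def \<Delta>_def d0_def Cy_def CG_def qq_def L_def Qy_def by simp_all
  have eqJ: "integral {-h..0} (\<lambda>\<theta>. norm (x (t+\<theta>)) powr K) = J0" unfolding J0_def n_def ..
  have eqS: "A powr K + Bn powr K + J0 = S" unfolding S_def ..
  show ?thesis
    unfolding eqs eqJ Geq Feq eqS using main by simp
qed

lemma exp_int:
  fixes \<epsilon> \<tau> :: real
  assumes e: "\<epsilon> > 0" and tau: "\<tau> \<ge> 0"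
  shows "((\<lambda>s. exp (- \<epsilon> * (\<tau> - s))) has_integral (1 - exp (- \<epsilon> * \<tau>)) / \<epsilon>) {0..\<tau>}"
proof -
  have "((\<lambda>s. exp (- \<epsilon> * (\<tau> - s))) has_integral ((\<lambda>s. exp (- \<epsilon> * (\<tau> - s)) / \<epsilon>) \<tau> - (\<lambda>s. exp (- \<epsilon> * (\<tau> - s)) / \<epsilon>) 0)) {0..\<tau>}"
  proof (rule fundamental_theorem_of_calculus[OF tau])
    fix s assume "s \<in> {0..\<tau>}"
    have "((\<lambda>s. exp (- \<epsilon> * (\<tau> - s)) / \<epsilon>) has_real_derivative exp (- \<epsilon> * (\<tau> - s))) (at s within {0..\<tau>})"
      using e by (auto intro!: derivative_eq_intros)
    then show "((\<lambda>s. exp (- \<epsilon> * (\<tau> - s)) / \<epsilon>) has_vector_derivative exp (- \<epsilon> * (\<tau> - s))) (at s within {0..\<tau>})"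
      by (simp add: has_real_derivative_iff_has_vector_derivative)
  qed
  then show ?thesis by (simp add: diff_divide_distrib)
qed

lemma int_exp_bound:
  fixes v :: "real \<Rightarrow> 'a::euclidean_space"
  assumes e: "\<epsilon> > 0" and tau: "\<tau> \<ge> 0"
    and vc: "continuous_on {0..\<tau>} v" and vb: "\<And>s. s \<in> {0..\<tau>} \<Longrightarrow> norm (v s) \<le> c"
  shows "\<epsilon> * norm (integral {0..\<tau>} (\<lambda>s. exp (- \<epsilon> * (\<tau> - s)) *\<^sub>R v s)) \<le> c"
proof -
  have c0: "c \<ge> 0" using vb[of 0] tau by (meson atLeastAtMost_iff norm_ge_zero order_trans order_refl)
  have ei: "(\<lambda>s. exp (- \<epsilon> * (\<tau> - s))) integrable_on {0..\<tau>}" using exp_int[OF e tau] by blast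
  have "norm (integral {0..\<tau>} (\<lambda>s. exp (- \<epsilon> * (\<tau> - s)) *\<^sub>R v s)) \<le> integral {0..\<tau>} (\<lambda>s. c * exp (- \<epsilon> * (\<tau> - s)))"
  proof (rule Henstock_Kurzweil_Integration.integral_norm_bound_integral)
    show "(\<lambda>s. exp (- \<epsilon> * (\<tau> - s)) *\<^sub>R v s) integrable_on {0..\<tau>}"
      using vc by (intro integrable_continuous_interval continuous_intros)
    show "(\<lambda>s. c * exp (- \<epsilon> * (\<tau> - s))) integrable_on {0..\<tau>}"
      using ei by (rule integrable_on_mult_right)
    fix s assume "s \<in> {0..\<tau>}"
    then show "norm (exp (- \<epsilon> * (\<tau> - s)) *\<^sub>R v s) \<le> c * exp (- \<epsilon> * (\<tau> - s))"
      using vb by (simp add: mult.commute)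
  qed
  also have "\<dots> = c * ((1 - exp (- \<epsilon> * \<tau>)) / \<epsilon>)"
    using integral_unique[OF exp_int[OF e tau]] by simp
  finally have "\<epsilon> * norm (integral {0..\<tau>} (\<lambda>s. exp (- \<epsilon> * (\<tau> - s)) *\<^sub>R v s)) \<le> \<epsilon> * (c * ((1 - exp (- \<epsilon> * \<tau>)) / \<epsilon>))"
    using e by (intro mult_left_mono) auto
  also have "\<dots> = c * (1 - exp (- \<epsilon> * \<tau>))" using e by simp
  also have "\<dots> \<le> c" using c0 by (simp add: mult_left_le)
  finally show ?thesis .
qed

lemma shift_within:
  fixes F :: "real \<Rightarrow> 'a::real_normed_vector"
  assumes d: "(F has_vector_derivative F') (at (s+T) within {0..})" and T: "T \<ge> 0"
  shows "((\<lambda>s. F (s+T)) has_vector_derivative F') (at s within {0..})"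
proof -
  have d2: "(F has_vector_derivative F') (at ((\<lambda>s. s + T) s) within (\<lambda>s. s + T) ` {0..})"
    using d by (rule has_vector_derivative_within_subset) (use T in auto)
  have d1: "((\<lambda>s. s + T) has_vector_derivative 1) (at s within {0..})"
    by (auto intro!: derivative_eq_intros)
  from vector_diff_chain_within[OF d1 d2] show ?thesis by (simp add: o_def)
qed

lemma vd_cont:
  fixes F :: "real \<Rightarrow> 'a::real_normed_vector"
  assumes "\<And>s. s \<ge> 0 \<Longrightarrow> (F has_vector_derivative F' s) (at s within {0..})"
  shows "continuous_on {0..} F"
  by (rule has_derivative_continuous_on) (use assms in \<open>auto simp: has_vector_derivative_def\<close>)

lemma avg_lemma:
  fixes b :: "real \<Rightarrow> 'a::euclidean_space"
  assumes bc: "continuous_on {0..} b" and bb: "\<And>s. s \<ge> 0 \<Longrightarrow> norm (b s) \<le> \<beta>0"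
    and T: "T > 0" and av: "\<And>s. s \<ge> 0 \<Longrightarrow> norm (integral {s..s+T} b) \<le> e * T"
    and eps: "\<epsilon> > 0" and tau: "\<tau> \<ge> 0"
  shows "\<epsilon> * norm (integral {0..\<tau>} (\<lambda>s. exp (- \<epsilon> * (\<tau> - s)) *\<^sub>R b s)) \<le> e + 3 * \<epsilon> * \<beta>0 * T"
proof -
  have b0: "\<beta>0 \<ge> 0" using bb[of 0] by (meson norm_ge_zero order_trans order_refl)
  define A where "A s = integral {0..s} b" for s
  define G where "G s = integral {0..s} A" for s
  define C where "C s = (1/T) *\<^sub>R (G (s+T) - G s) - A s" for s
  define v where "v s = (1/T) *\<^sub>R (A (s+T) - A s)" for s
  define \<phi> where "\<phi> s = exp (- \<epsilon> * (\<tau> - s))" for s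
  have dA: "(A has_vector_derivative b s) (at s within {0..})" if "s \<ge> 0" for s
    unfolding A_def using ftc_within[OF bc that] .
  have Ac: "continuous_on {0..} A" using dA by (rule vd_cont)
  have dG: "(G has_vector_derivative A s) (at s within {0..})" if "s \<ge> 0" for s
    unfolding G_def using ftc_within[OF Ac that] .
  have dC: "(C has_vector_derivative (v s - b s)) (at s within {0..})" if s: "s \<ge> 0" for s
  proof -
    have "((\<lambda>s. (1/T) *\<^sub>R (G (s+T) - G s) - A s) has_vector_derivative ((1/T) *\<^sub>R (A (s+T) - A s) - b s)) (at s within {0..})"
      using s T by (intro derivative_eq_intros shift_within dG dA) (auto intro: dG dA)
    then show ?thesis unfolding C_def v_def .
  qed
  have Cc: "continuous_on {0..} C" using dC by (rule vd_cont)
  have vc: "continuous_on {0..} v"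
  proof -
    have c: "continuous_on {0..} (\<lambda>s. s + T)" by (intro continuous_intros)
    have i: "(\<lambda>s. s + T) ` {0..} \<subseteq> {0..}" using T by auto
    have "continuous_on {0..} (\<lambda>s. A (s + T))" using continuous_on_compose2[OF Ac c i] .
    then show ?thesis unfolding v_def using Ac by (intro continuous_intros)
  qed
  have Aint: "A u - A s = integral {s..u} b" if "0 \<le> s" "s \<le> u" for s u
  proof -
    have bi: "b integrable_on {0..u}" using bc that by (intro integrable_continuous_interval continuous_on_subset[OF bc]) auto
    show ?thesis using Henstock_Kurzweil_Integration.integral_combine[where a=0 and c=s and b=u and f=b] bi that
      unfolding A_def by (simp add: algebra_simps)
  qed
  have vb: "norm (v s) \<le> e" if "s \<ge> 0" for s
  proof -
    have "norm (v s) = norm (integral {s..s+T} b) / T"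
      unfolding v_def using Aint[of s "s+T"] that T by simp
    also have "\<dots> \<le> e * T / T" using av[OF that] T by (intro divide_right_mono) auto
    finally show ?thesis using T by simp
  qed
  have Cb: "norm (C s) \<le> \<beta>0 * T" if s: "s \<ge> 0" for s
  proof -
    have Ai: "A integrable_on {s..s+T}" using Ac s T by (intro integrable_continuous_interval continuous_on_subset[OF Ac]) auto
    have "G (s+T) - G s = integral {s..s+T} A"
    proof -
      have Ai2: "A integrable_on {0..s+T}" using Ac s T by (intro integrable_continuous_interval continuous_on_subset[OF Ac]) auto
      show ?thesis using Henstock_Kurzweil_Integration.integral_combine[where a=0 and c=s and b="s+T" and f=A] Ai2 s T
        unfolding G_def by (simp add: algebra_simps)
    qed
    then have "C s = (1/T) *\<^sub>R (integral {s..s+T} A - integral {s..s+T} (\<lambda>u. A s))"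
      unfolding C_def using T by (simp add: algebra_simps)
    also have "\<dots> = (1/T) *\<^sub>R integral {s..s+T} (\<lambda>u. A u - A s)"
      by (subst integral_diff) (use Ai in \<open>auto intro: integrable_continuous_interval continuous_intros\<close>)
    finally have Ceq: "C s = (1/T) *\<^sub>R integral {s..s+T} (\<lambda>u. A u - A s)" .
    have "norm (integral {s..s+T} (\<lambda>u. A u - A s)) \<le> (\<beta>0 * T) * ((s + T) - s)"
    proof (rule integral_bound)
      show "s \<le> s + T" using T by simp
      show "continuous_on {s..s + T} (\<lambda>u. A u - A s)"
        using s by (intro continuous_intros continuous_on_subset[OF Ac]) auto
      fix u assume u: "u \<in> {s..s+T}"
      have "norm (A u - A s) = norm (integral {s..u} b)" using Aint[of s u] u s by simp
      also have "\<dots> \<le> \<beta>0 * (u - s)"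
        using u s by (intro integral_bound continuous_on_subset[OF bc] bb) auto
      also have "\<dots> \<le> \<beta>0 * T" using u b0 by (intro mult_left_mono) auto
      finally show "norm (A u - A s) \<le> \<beta>0 * T" .
    qed
    then show ?thesis unfolding Ceq using T by (simp add: field_simps)
  qed
  \<comment> \<open>integration by parts\<close>
  define Fd where "Fd s = \<phi> s *\<^sub>R (v s - b s) + (\<epsilon> * \<phi> s) *\<^sub>R C s" for s
  have dF: "((\<lambda>s. \<phi> s *\<^sub>R C s) has_vector_derivative Fd s) (at s within {0..\<tau>})" if "s \<in> {0..\<tau>}" for s
  proof -
    have dphi: "(\<phi> has_real_derivative \<epsilon> * \<phi> s) (at s within {0..})"
      unfolding \<phi>_def by (auto intro!: derivative_eq_intros simp: algebra_simps)
    have "((\<lambda>s. \<phi> s *\<^sub>R C s) has_vector_derivative \<phi> s *\<^sub>R (v s - b s) + (\<epsilon> * \<phi> s) *\<^sub>R C s) (at s within {0..})"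
      using has_vector_derivative_scaleR[OF dphi dC] that by simp
    then show ?thesis unfolding Fd_def by (rule has_vector_derivative_within_subset) auto
  qed
  have FTC: "(Fd has_integral (\<phi> \<tau> *\<^sub>R C \<tau> - \<phi> 0 *\<^sub>R C 0)) {0..\<tau>}"
    by (rule fundamental_theorem_of_calculus[OF tau dF])
  have i1: "((\<lambda>s. \<phi> s *\<^sub>R v s) has_integral integral {0..\<tau>} (\<lambda>s. \<phi> s *\<^sub>R v s)) {0..\<tau>}"
    unfolding \<phi>_def by (intro integrable_integral integrable_continuous_interval continuous_intros continuous_on_subset[OF vc]) auto
  have i2: "((\<lambda>s. \<phi> s *\<^sub>R C s) has_integral integral {0..\<tau>} (\<lambda>s. \<phi> s *\<^sub>R C s)) {0..\<tau>}"
    unfolding \<phi>_def by (intro integrable_integral integrable_continuous_interval continuous_intros continuous_on_subset[OF Cc]) auto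
  have "((\<lambda>s. \<phi> s *\<^sub>R v s + \<epsilon> *\<^sub>R (\<phi> s *\<^sub>R C s) - Fd s) has_integral
      (integral {0..\<tau>} (\<lambda>s. \<phi> s *\<^sub>R v s) + \<epsilon> *\<^sub>R integral {0..\<tau>} (\<lambda>s. \<phi> s *\<^sub>R C s) - (\<phi> \<tau> *\<^sub>R C \<tau> - \<phi> 0 *\<^sub>R C 0))) {0..\<tau>}"
    by (intro has_integral_diff has_integral_add has_integral_cmul i1 i2 FTC)
  moreover have "(\<lambda>s. \<phi> s *\<^sub>R v s + \<epsilon> *\<^sub>R (\<phi> s *\<^sub>R C s) - Fd s) = (\<lambda>s. \<phi> s *\<^sub>R b s)"
    by (rule ext) (simp add: Fd_def algebra_simps)
  ultimately have Ieq: "integral {0..\<tau>} (\<lambda>s. \<phi> s *\<^sub>R b s) =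
      integral {0..\<tau>} (\<lambda>s. \<phi> s *\<^sub>R v s) + \<epsilon> *\<^sub>R integral {0..\<tau>} (\<lambda>s. \<phi> s *\<^sub>R C s) - (\<phi> \<tau> *\<^sub>R C \<tau> - \<phi> 0 *\<^sub>R C 0)"
    by (simp add: integral_unique)
  have B1: "\<epsilon> * norm (integral {0..\<tau>} (\<lambda>s. \<phi> s *\<^sub>R v s)) \<le> e"
    unfolding \<phi>_def by (rule int_exp_bound[OF eps tau]) (use vb in \<open>auto intro: continuous_on_subset[OF vc]\<close>)
  have B2: "\<epsilon> * norm (integral {0..\<tau>} (\<lambda>s. \<phi> s *\<^sub>R C s)) \<le> \<beta>0 * T"
    unfolding \<phi>_def by (rule int_exp_bound[OF eps tau]) (use Cb in \<open>auto intro: continuous_on_subset[OF Cc]\<close>)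
  have phi1: "\<phi> \<tau> = 1" "0 \<le> \<phi> 0" "\<phi> 0 \<le> 1" unfolding \<phi>_def using eps tau by auto
  have B3: "norm (\<phi> \<tau> *\<^sub>R C \<tau> - \<phi> 0 *\<^sub>R C 0) \<le> 2 * (\<beta>0 * T)"
  proof -
    have "norm (\<phi> \<tau> *\<^sub>R C \<tau> - \<phi> 0 *\<^sub>R C 0) \<le> norm (C \<tau>) + \<phi> 0 * norm (C 0)"
      using norm_triangle_ineq4[of "\<phi> \<tau> *\<^sub>R C \<tau>" "\<phi> 0 *\<^sub>R C 0"] phi1 by simp
    also have "\<dots> \<le> \<beta>0 * T + 1 * (\<beta>0 * T)"
      using Cb[OF tau] Cb[of 0] phi1 by (intro add_mono mult_mono) auto
    finally show ?thesis by linarith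
  qed
  have "\<epsilon> * norm (integral {0..\<tau>} (\<lambda>s. \<phi> s *\<^sub>R b s))
      \<le> \<epsilon> * (norm (integral {0..\<tau>} (\<lambda>s. \<phi> s *\<^sub>R v s)) + \<epsilon> * norm (integral {0..\<tau>} (\<lambda>s. \<phi> s *\<^sub>R C s))
           + norm (\<phi> \<tau> *\<^sub>R C \<tau> - \<phi> 0 *\<^sub>R C 0))"
  proof -
    have tri: "norm (X + \<epsilon> *\<^sub>R Y - Z) \<le> norm X + \<epsilon> * norm Y + norm Z" for X Y Z :: 'a
      using norm_triangle_ineq4[of "X + \<epsilon> *\<^sub>R Y" Z] norm_triangle_ineq[of X "\<epsilon> *\<^sub>R Y"] eps by simp
    show ?thesis unfolding Ieq using eps by (intro mult_left_mono tri) auto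
  qed
  also have "\<dots> = \<epsilon> * norm (integral {0..\<tau>} (\<lambda>s. \<phi> s *\<^sub>R v s)) + \<epsilon> * (\<epsilon> * norm (integral {0..\<tau>} (\<lambda>s. \<phi> s *\<^sub>R C s)))
           + \<epsilon> * norm (\<phi> \<tau> *\<^sub>R C \<tau> - \<phi> 0 *\<^sub>R C 0)" by (simp add: algebra_simps)
  also have "\<dots> \<le> e + \<epsilon> * (\<beta>0 * T) + \<epsilon> * (2 * (\<beta>0 * T))"
    using B1 B2 B3 eps by (intro add_mono mult_left_mono) auto
  finally show ?thesis unfolding \<phi>_def by (simp add: algebra_simps)
qed

lemma fin_ineq:
  fixes W0 w1 w2 cm A Bn J :: real
  assumes "cm * A \<le> W0 * A" "cm * Bn \<le> w1 * Bn" "cm * J \<le> w2 * J"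
  shows "- W0 * A - w1 * Bn - w2 * J + cm / 2 * (A + Bn + J) \<le> - (W0 / 2) * A - w1 / 2 * Bn - w2 / 2 * J"
proof -
  have e: "cm / 2 * (A + Bn + J) = (cm * A) / 2 + (cm * Bn) / 2 + (cm * J) / 2"
    "(W0 / 2) * A = (W0 * A) / 2" "w1 / 2 * Bn = (w1 * Bn) / 2" "w2 / 2 * J = (w2 * J) / 2"
    by (simp_all add: field_simps)
  show ?thesis unfolding e using assms by linarith
qed

theorem lemma1:
  fixes h \<mu> \<sigma> \<gamma> m1 m2 \<eta>11 \<eta>12 bh p1 p2 q11 q12 q21 q22 w \<alpha>0 \<alpha>1 \<beta> \<psi> w1 w2 :: real
    and f Q :: "real^'n \<Rightarrow> real^'n \<Rightarrow> real^'n"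
    and f1 f2 Q1 Q2 :: "real^'n \<Rightarrow> real^'n \<Rightarrow> (real^'n) \<Rightarrow>\<^sub>L (real^'n)"
    and B :: "real \<Rightarrow> real^'n^'n"
    and V :: "real^'n \<Rightarrow> real" and V' :: "real^'n \<Rightarrow> real^'n"
    and V'' :: "real^'n \<Rightarrow> (real^'n) \<Rightarrow>\<^sub>L (real^'n)"
  assumes h_pos: "h > 0"
    \<comment> \<open>(i) f is C^1 with partial derivatives f1, f2, homogeneous of degree mu > 1\<close>
    and f_deriv: "\<And>a b. ((\<lambda>p. f (fst p) (snd p)) has_derivative
                     (\<lambda>u. blinfun_apply (f1 a b) (fst u) + blinfun_apply (f2 a b) (snd u))) (at (a, b))"
    and f1_cont: "continuous_on UNIV (\<lambda>p. f1 (fst p) (snd p))"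
    and f2_cont: "continuous_on UNIV (\<lambda>p. f2 (fst p) (snd p))"
    and mu_gt: "\<mu> > 1"
    and f_hom: "\<And>c a b. c > 0 \<Longrightarrow> f (c *\<^sub>R a) (c *\<^sub>R b) = c powr \<mu> *\<^sub>R f a b"
    and m_nonneg: "m1 \<ge> 0" "m2 \<ge> 0" "\<eta>11 \<ge> 0" "\<eta>12 \<ge> 0"
    and f_bound: "\<And>a b. norm (f a b) \<le> m1 * norm a powr \<mu> + m2 * norm b powr \<mu>"
    and f1_bound: "\<And>a b. norm (f1 a b) \<le> \<eta>11 * norm a powr (\<mu> - 1) + \<eta>12 * norm b powr (\<mu> - 1)"
    \<comment> \<open>(ii) B continuous and bounded in operator norm\<close>
    and B_cont: "continuous_on {0..} B"
    and B_bound: "\<And>t. t \<ge> 0 \<Longrightarrow> onorm ((*v) (B t)) \<le> bh"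
    \<comment> \<open>(iii) Q is C^1 with partial derivatives Q1, Q2 and the growth bounds\<close>
    and Q_deriv: "\<And>a b. ((\<lambda>p. Q (fst p) (snd p)) has_derivative
                     (\<lambda>u. blinfun_apply (Q1 a b) (fst u) + blinfun_apply (Q2 a b) (snd u))) (at (a, b))"
    and Q1_cont: "continuous_on UNIV (\<lambda>p. Q1 (fst p) (snd p))"
    and Q2_cont: "continuous_on UNIV (\<lambda>p. Q2 (fst p) (snd p))"
    and sigma_gt: "\<sigma> > 1"
    and p_nonneg: "p1 \<ge> 0" "p2 \<ge> 0" "q11 \<ge> 0" "q12 \<ge> 0" "q21 \<ge> 0" "q22 \<ge> 0"
    and Q_bound: "\<And>a b. norm (Q a b) \<le> p1 * norm a powr \<sigma> + p2 * norm b powr \<sigma>"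
    and Q1_bound: "\<And>a b. norm (Q1 a b) \<le> q11 * norm a powr (\<sigma> - 1) + q12 * norm b powr (\<sigma> - 1)"
    and Q2_bound: "\<And>a b. norm (Q2 a b) \<le> q21 * norm a powr (\<sigma> - 1) + q22 * norm b powr (\<sigma> - 1)"
    \<comment> \<open>(iv) Lyapunov function V: C^2 (gradient V', Hessian V''), homogeneous of degree gamma \<ge> 2\<close>
    and V_deriv: "\<And>a. (V has_derivative (\<lambda>u. V' a \<bullet> u)) (at a)"
    and V'_deriv: "\<And>a. (V' has_derivative blinfun_apply (V'' a)) (at a)"
    and V''_cont: "continuous_on UNIV V''"
    and gamma_ge: "\<gamma> \<ge> 2"
    and V_hom: "\<And>c a. c > 0 \<Longrightarrow> V (c *\<^sub>R a) = c powr \<gamma> * V a"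
    and V_posdef: "V 0 = 0" "\<And>a. a \<noteq> 0 \<Longrightarrow> V a > 0"
    and consts_pos: "w > 0" "\<alpha>0 > 0" "\<alpha>1 > 0" "\<beta> > 0" "\<psi> > 0"
    and V_decr: "\<And>a. V' a \<bullet> f a a \<le> - w * norm a powr (\<gamma> + \<mu> - 1)"
    and V_bounds: "\<And>a. \<alpha>0 * norm a powr \<gamma> \<le> V a" "\<And>a. V a \<le> \<alpha>1 * norm a powr \<gamma>"
    and V'_bound: "\<And>a. norm (V' a) \<le> \<beta> * norm a powr (\<gamma> - 1)"
    and V''_bound: "\<And>a. a \<noteq> 0 \<Longrightarrow> norm (V'' a) \<le> \<psi> * norm a powr (\<gamma> - 2)"
    \<comment> \<open>weights of the functional\<close>
    and w12_pos: "w1 > 0" "w2 > 0"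
    and w0_pos: "w - w1 - h * w2 > 0"
  shows "((\<exists>K. \<forall>t\<ge>0. onorm ((*v) (integral {0..t} B)) \<le> K) \<and> \<sigma> > (\<mu> + 1) / 2
            \<longrightarrow> derivative_estimate h f B Q V V' \<gamma> \<mu> w1 w2 0)
       \<and> ((\<forall>e>0. \<exists>T0>0. \<forall>T\<ge>T0. \<forall>t\<ge>0. onorm ((*v) ((1 / T) *\<^sub>R integral {t..t + T} B)) \<le> e)
            \<and> \<sigma> \<ge> \<mu>
            \<longrightarrow> (\<exists>\<epsilon>0>0. \<forall>\<epsilon>. 0 < \<epsilon> \<and> \<epsilon> < \<epsilon>0
                   \<longrightarrow> derivative_estimate h f B Q V V' \<gamma> \<mu> w1 w2 \<epsilon>))"
proof -
  have bh: "bh \<ge> 0"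
    using B_bound[of 0] onorm_pos_le[OF matrix_vector_mul_bounded_linear, of "B 0"] by linarith
  interpret mv: bounded_bilinear "\<lambda>(M::real^'n^'n) (v::real^'n). M *v v" by (rule bb_mv)
  have kpos: "\<gamma> + \<mu> - 1 > 0" using gamma_ge mu_gt by simp
  have notbot: "at t within {0..} \<noteq> bot" if "t \<ge> (0::real)" for t
  proof -
    have "at_right t \<le> at t within {0..}" by (rule at_le) (use that in auto)
    moreover have "at_right t \<noteq> bot" by simp
    ultimately show ?thesis by (metis bot.extremum_unique)
  qed
  define cm where "cm = min (w - w1 - h * w2) (min w1 w2)"
  have cm: "cm > 0" "cm \<le> w - w1 - h * w2" "cm \<le> w1" "cm \<le> w2"
    using w0_pos w12_pos unfolding cm_def by auto
  \<comment> \<open>core argument, for a given parameter and given bounds on L\<close>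
  have core: "derivative_estimate h f B Q V V' \<gamma> \<mu> w1 w2 \<epsilon>"
    if d0pos: "2 * min \<mu> \<sigma> - \<mu> - 1 > 0"
      and Lb: "\<And>t q. t \<ge> 0 \<Longrightarrow> norm (Lmat h B \<epsilon> t *v q) \<le> l * norm q" and l: "l \<ge> 0"
      and Eb: "\<And>t q. t \<ge> 0 \<Longrightarrow> norm ((\<epsilon> *\<^sub>R Lmat h B \<epsilon> t) *v q) \<le> \<omega> * norm q" and om: "\<omega> \<ge> 0"
      and omc: "\<omega> = 0 \<or> \<mu> \<le> \<sigma>"
      and omsmall: "\<beta> * (p1 + p2) * \<omega> \<le> cm / 4"
    for \<epsilon> l \<omega>
  proof -
    define d0 where "d0 = 2 * min \<mu> \<sigma> - \<mu> - 1"
    define Cst where "Cst = ((\<beta> * (m1 + m2 + bh * (p1 + p2)) * (\<eta>11 + \<eta>12 + bh * (q11 + q12))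
            + \<psi> * (m1 + m2 + bh * (p1 + p2)) * (m1 + m2 + bh * (p1 + p2))) * (1 + h)
          + \<psi> * (m1 + m2 + bh * (p1 + p2)) * l * (p1 + p2)
          + \<beta> * l * (q11 + q12 + q21 + q22) * (m1 + m2 + bh * (p1 + p2)))"
    have Cst0: "Cst \<ge> 0" unfolding Cst_def
      using consts_pos m_nonneg p_nonneg bh l h_pos by (intro add_nonneg_nonneg mult_nonneg_nonneg) auto
    define c where "c = cm / (4 * (Cst + 1))"
    have c0: "c > 0" unfolding c_def using cm Cst0 by auto
    define \<delta> where "\<delta> = min 1 (c powr (1 / d0))"
    have d0: "d0 > 0" using d0pos unfolding d0_def .
    have delta: "0 < \<delta>" "\<delta> \<le> 1" unfolding \<delta>_def using c0 by auto
    have dpow: "\<delta> powr d0 \<le> c"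
    proof -
      have "\<delta> powr d0 \<le> (c powr (1 / d0)) powr d0"
        unfolding \<delta>_def using d0 c0 by (intro powr_mono2) auto
      also have "\<dots> = c" using d0 c0 by (simp add: powr_powr)
      finally show ?thesis .
    qed
    have eta: "Cst * \<delta> powr d0 + \<beta> * (p1 + p2) * \<omega> \<le> cm / 2"
    proof -
      have "Cst * \<delta> powr d0 \<le> Cst * c" using dpow Cst0 by (rule mult_left_mono)
      also have "\<dots> \<le> cm / 4" unfolding c_def using Cst0 cm by (simp add: field_simps)
      finally show ?thesis using omsmall by linarith
    qed
    have main: "\<forall>x t D. is_solution h f B Q x \<and> t \<ge> 0 \<and>
               (\<forall>\<theta>\<in>{-h..0}. norm (x (t + \<theta>)) \<le> \<delta>) \<and>
               ((\<lambda>s. vfun h f B Q V V' \<gamma> \<mu> w1 w2 \<epsilon> s (state x s)) has_real_derivative D)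
                  (at t within {0..})
         \<longrightarrow> D \<le> - ((w - w1 - h * w2) / 2) * norm (x t) powr (\<gamma> + \<mu> - 1)
                  - (w1 / 2) * norm (x (t - h)) powr (\<gamma> + \<mu> - 1)
                  - (w2 / 2) * integral {-h..0} (\<lambda>\<theta>. norm (x (t + \<theta>)) powr (\<gamma> + \<mu> - 1))"
    proof (intro allI impI)
      fix x t D
      assume H: "is_solution h f B Q x \<and> t \<ge> 0 \<and> (\<forall>\<theta>\<in>{-h..0}. norm (x (t + \<theta>)) \<le> \<delta>) \<and>
        ((\<lambda>s. vfun h f B Q V V' \<gamma> \<mu> w1 w2 \<epsilon> s (state x s)) has_real_derivative D) (at t within {0..})"
      then have sol: "is_solution h f B Q x" and t: "t \<ge> 0" and xb: "\<forall>\<theta>\<in>{-h..0}. norm (x (t + \<theta>)) \<le> \<delta>"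
        and DD: "((\<lambda>s. vfun h f B Q V V' \<gamma> \<mu> w1 w2 \<epsilon> s (state x s)) has_real_derivative D) (at t within {0..})"
        by auto
      have xc: "continuous_on {-h..} x" using sol unfolding is_solution_def by auto
      note vd = vfun_deriv[OF h_pos t f_deriv f1_cont B_cont Q_deriv Q1_cont V_deriv V'_deriv sol kpos, where ?w1.0=w1 and ?w2.0=w2 and \<epsilon>=\<epsilon>]
      note es = estimate[OF h_pos mu_gt m_nonneg f_bound f1_bound bh B_bound sigma_gt p_nonneg Q_bound Q1_bound Q2_bound
          V''_cont gamma_ge consts_pos(4) consts_pos(5) V_decr V'_bound V''_bound d0pos delta t xc xb Lb[OF t] l Eb[OF t] om omc,
          where ?w1.0=w1 and ?w2.0=w2]
      note Deq = vector_derivative_unique_within[OF notbot[OF t] DD[unfolded has_real_derivative_iff_has_vector_derivative]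
              vd[unfolded has_real_derivative_iff_has_vector_derivative]]
      define A where "A = norm (x t) powr (\<gamma> + \<mu> - 1)"
      define Bn where "Bn = norm (x (t - h)) powr (\<gamma> + \<mu> - 1)"
      define J where "J = integral {-h..0} (\<lambda>\<theta>. norm (x (t + \<theta>)) powr (\<gamma> + \<mu> - 1))"
      have J0: "J \<ge> 0" unfolding J_def
      proof (rule Henstock_Kurzweil_Integration.integral_nonneg)
        have c: "continuous_on {-h..0} (\<lambda>\<theta>. t + \<theta>)" by (intro continuous_intros)
        have i: "(\<lambda>\<theta>. t + \<theta>) ` {-h..0} \<subseteq> {-h..}" using t by auto
        have "continuous_on {-h..0} (\<lambda>\<theta>. x (t + \<theta>))" using continuous_on_compose2[OF xc c i] .
        then show "(\<lambda>\<theta>. norm (x (t + \<theta>)) powr (\<gamma> + \<mu> - 1)) integrable_on {-h..0}"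
          using kpos by (intro integrable_continuous_interval continuous_on_powr') (auto intro!: continuous_intros)
      qed auto
      have A0: "A \<ge> 0" "Bn \<ge> 0" unfolding A_def Bn_def by auto
      have "D \<le> - (w - w1 - h * w2) * A - w1 * Bn - w2 * J
           + (Cst * \<delta> powr d0 + \<beta> * (p1 + p2) * \<omega>) * (A + Bn + J)"
        unfolding Deq A_def Bn_def J_def Cst_def d0_def using es by simp
      also have "\<dots> \<le> - (w - w1 - h * w2) * A - w1 * Bn - w2 * J + (cm / 2) * (A + Bn + J)"
        using eta A0 J0 by (intro add_left_mono mult_right_mono) auto
      also have "\<dots> \<le> - ((w - w1 - h * w2) / 2) * A - (w1 / 2) * Bn - (w2 / 2) * J"
      proof (rule fin_ineq)
        show "cm * A \<le> (w - w1 - h * w2) * A" using cm A0 by (intro mult_right_mono) auto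
        show "cm * Bn \<le> w1 * Bn" using cm A0 by (intro mult_right_mono) auto
        show "cm * J \<le> w2 * J" using cm J0 by (intro mult_right_mono) auto
      qed
      finally show "D \<le> - ((w - w1 - h * w2) / 2) * norm (x t) powr (\<gamma> + \<mu> - 1)
                  - (w1 / 2) * norm (x (t - h)) powr (\<gamma> + \<mu> - 1)
                  - (w2 / 2) * integral {-h..0} (\<lambda>\<theta>. norm (x (t + \<theta>)) powr (\<gamma> + \<mu> - 1))"
        unfolding A_def Bn_def J_def by simp
    qed
    show ?thesis unfolding derivative_estimate_def
      apply (rule exI[of _ \<delta>], rule conjI, rule delta(1))
      apply (rule exI[of _ "(w - w1 - h * w2) / 2"], rule conjI)
      using w0_pos apply simp
      apply (rule exI[of _ "w1 / 2"], rule conjI)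
      using w12_pos apply simp
      apply (rule exI[of _ "w2 / 2"], rule conjI)
      using w12_pos apply simp
      using main by simp
  qed
  have Lint: "integral S (\<lambda>s. F s *v q) = integral S F *v q" if "F integrable_on S"
    for F :: "real \<Rightarrow> real^'n^'n" and S q
  proof -
    have "integral S ((\<lambda>M. M *v q) \<circ> F) = integral S F *v q"
      by (rule integral_linear[OF that mv.bounded_linear_left])
    then show ?thesis by (simp add: o_def)
  qed
  have Bi: "B integrable_on {a..b}" if "a \<ge> 0" for a b
    using that by (intro integrable_continuous_interval continuous_on_subset[OF B_cont]) auto
  show ?thesis
  proof (intro conjI impI)
    assume "(\<exists>K. \<forall>t\<ge>0. onorm ((*v) (integral {0..t} B)) \<le> K) \<and> \<sigma> > (\<mu> + 1) / 2"
    then obtain K where K: "\<And>t. t \<ge> 0 \<Longrightarrow> onorm ((*v) (integral {0..t} B)) \<le> K"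
      and sg: "\<sigma> > (\<mu> + 1) / 2" by auto
    have d0pos: "2 * min \<mu> \<sigma> - \<mu> - 1 > 0" using sg mu_gt by (auto simp: min_def)
    have Lm0: "Lmat h B 0 t = integral {0..t+h} B" for t unfolding Lmat_def by simp
    have K0: "K \<ge> 0" using K[of 0] onorm_pos_le[OF matrix_vector_mul_bounded_linear, of "integral {0..0} B"] by linarith
    show "derivative_estimate h f B Q V V' \<gamma> \<mu> w1 w2 0"
    proof (rule core[where l=K and \<omega>=0])
      show "norm (Lmat h B 0 t *v q) \<le> K * norm q" if "t \<ge> 0" for t q
      proof -
        have "norm (Lmat h B 0 t *v q) \<le> onorm ((*v) (Lmat h B 0 t)) * norm q" by (rule norm_mv_le)
        also have "\<dots> \<le> K * norm q" unfolding Lm0 using K[of "t+h"] that h_pos by (intro mult_right_mono) auto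
        finally show ?thesis .
      qed
      show "norm ((0 *\<^sub>R Lmat h B 0 t) *v q) \<le> 0 * norm q" for t q by simp
    qed (use d0pos K0 cm in auto)
  next
    assume "(\<forall>e>0. \<exists>T0>0. \<forall>T\<ge>T0. \<forall>t\<ge>0. onorm ((*v) ((1 / T) *\<^sub>R integral {t..t + T} B)) \<le> e) \<and> \<sigma> \<ge> \<mu>"
    then have avg: "\<And>e. e > 0 \<Longrightarrow> \<exists>T0>0. \<forall>T\<ge>T0. \<forall>t\<ge>0. onorm ((*v) ((1 / T) *\<^sub>R integral {t..t + T} B)) \<le> e"
      and sg: "\<sigma> \<ge> \<mu>" by auto
    have d0pos: "2 * min \<mu> \<sigma> - \<mu> - 1 > 0" using sg mu_gt by (auto simp: min_def)
    define \<omega>0 where "\<omega>0 = cm / (4 * (\<beta> * (p1 + p2) + 1))"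
    have bp: "\<beta> * (p1 + p2) \<ge> 0" using consts_pos p_nonneg by auto
    have om0: "\<omega>0 > 0" unfolding \<omega>0_def using cm bp by auto
    have omsmall: "\<beta> * (p1 + p2) * \<omega>0 \<le> cm / 4"
    proof -
      have "\<beta> * (p1 + p2) * \<omega>0 = (cm / 4) * ((\<beta> * (p1 + p2)) / (\<beta> * (p1 + p2) + 1))"
        unfolding \<omega>0_def by (simp add: field_simps)
      also have "\<dots> \<le> (cm / 4) * 1" using cm bp by (intro mult_left_mono) auto
      finally show ?thesis by simp
    qed
    obtain T where T: "T > 0" and Tav: "\<And>t. t \<ge> 0 \<Longrightarrow> onorm ((*v) ((1 / T) *\<^sub>R integral {t..t + T} B)) \<le> \<omega>0 / 2"
      using avg[of "\<omega>0 / 2"] om0 by fastforce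
    define \<epsilon>0 where "\<epsilon>0 = \<omega>0 / (2 * (3 * bh * T + 1))"
    have "bh * T \<ge> 0" using bh T by simp
    then have e00: "\<epsilon>0 > 0" unfolding \<epsilon>0_def using om0 by (intro divide_pos_pos) auto
    show "\<exists>\<epsilon>0>0. \<forall>\<epsilon>. 0 < \<epsilon> \<and> \<epsilon> < \<epsilon>0 \<longrightarrow> derivative_estimate h f B Q V V' \<gamma> \<mu> w1 w2 \<epsilon>"
    proof (intro exI[of _ \<epsilon>0] conjI allI impI)
      show "\<epsilon>0 > 0" by (rule e00)
      fix \<epsilon> assume "0 < \<epsilon> \<and> \<epsilon> < \<epsilon>0"
      then have eps: "\<epsilon> > 0" "\<epsilon> < \<epsilon>0" by auto
      have bvc: "continuous_on {0..} (\<lambda>s. B s *v q)" for q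
        using B_cont by (intro mv.continuous_on continuous_intros)
      have Lapp: "Lmat h B \<epsilon> t *v q = integral {0..t+h} (\<lambda>s. exp (- \<epsilon> * (t + h - s)) *\<^sub>R (B s *v q))"
        if "t \<ge> 0" for t q
      proof -
        have "(\<lambda>s. exp (- \<epsilon> * (t + h - s)) *\<^sub>R B s) integrable_on {0..t+h}"
          by (intro integrable_continuous_interval continuous_intros continuous_on_subset[OF B_cont]) auto
        from Lint[OF this, where q=q] show ?thesis unfolding Lmat_def by (simp add: mv.scaleR_left)
      qed
      have bq: "norm (B s *v q) \<le> bh * norm q" if "s \<ge> 0" for s q
        using norm_mv_le[where M="B s" and v=q] B_bound[OF that] by (meson mult_right_mono norm_ge_zero order_trans)
      show "derivative_estimate h f B Q V V' \<gamma> \<mu> w1 w2 \<epsilon>"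
      proof (rule core[where l="bh / \<epsilon>" and \<omega>=\<omega>0])
        show "norm (Lmat h B \<epsilon> t *v q) \<le> bh / \<epsilon> * norm q" if "t \<ge> 0" for t q
        proof -
          have "\<epsilon> * norm (integral {0..t+h} (\<lambda>s. exp (- \<epsilon> * (t + h - s)) *\<^sub>R (B s *v q))) \<le> bh * norm q"
            using that h_pos by (intro int_exp_bound eps(1) bq continuous_on_subset[OF bvc]) auto
          then show ?thesis unfolding Lapp[OF that] using eps by (simp add: field_simps mult.commute)
        qed
        show "norm ((\<epsilon> *\<^sub>R Lmat h B \<epsilon> t) *v q) \<le> \<omega>0 * norm q" if "t \<ge> 0" for t q
        proof -
          have av: "norm (integral {s..s+T} (\<lambda>u. B u *v q)) \<le> (\<omega>0 / 2 * norm q) * T" if "s \<ge> 0" for s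
          proof -
            have "integral {s..s+T} (\<lambda>u. B u *v q) = T *\<^sub>R (((1 / T) *\<^sub>R integral {s..s+T} B) *v q)"
              using Lint[OF Bi[OF that], where q=q] T by (simp add: mv.scaleR_left)
            also have "norm \<dots> \<le> T * (onorm ((*v) ((1 / T) *\<^sub>R integral {s..s+T} B)) * norm q)"
              using T norm_mv_le by simp
            also have "\<dots> \<le> T * (\<omega>0 / 2 * norm q)"
              using Tav[OF that] T by (intro mult_left_mono mult_right_mono) auto
            finally show ?thesis by (simp add: mult.commute)
          qed
          have "\<epsilon> * norm (integral {0..t+h} (\<lambda>s. exp (- \<epsilon> * (t + h - s)) *\<^sub>R (B s *v q)))
              \<le> \<omega>0 / 2 * norm q + 3 * \<epsilon> * (bh * norm q) * T"
            by (rule avg_lemma[OF bvc[of q] bq[where q=q] T av eps(1)]) (use that h_pos in auto)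
          also have "\<dots> \<le> \<omega>0 * norm q"
          proof -
            have "3 * \<epsilon> * bh * T \<le> 3 * \<epsilon>0 * bh * T" using eps bh T by (intro mult_right_mono) auto
            also have "\<dots> \<le> \<omega>0 / 2"
            proof -
              define X where "X = 3 * bh * T"
              have X0: "X \<ge> 0" unfolding X_def using bh T by simp
              have "3 * \<epsilon>0 * bh * T = (\<omega>0 / 2) * (X / (X + 1))"
                unfolding \<epsilon>0_def X_def by (simp add: field_simps)
              also have "\<dots> \<le> (\<omega>0 / 2) * 1" using X0 om0 by (intro mult_left_mono) auto
              finally show ?thesis by simp
            qed
            finally have "(3 * \<epsilon> * bh * T) * norm q \<le> (\<omega>0 / 2) * norm q"
              by (rule mult_right_mono) simp
            then have "3 * \<epsilon> * (bh * norm q) * T \<le> \<omega>0 / 2 * norm q"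
              by (simp add: algebra_simps)
            then show ?thesis by simp
          qed
          finally show ?thesis unfolding mv.scaleR_left Lapp[OF that] using eps by simp
        qed
      qed (use d0pos bh eps om0 sg omsmall in auto)
    qed
  qed
qed

end
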